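(* Let $D$ be a division algebra and $\sigma\in\mathrm{Aut}(D)$. Let $D(t;\sigma)$ be the division ring of (left) fractions of the skew polynomial ring $D[t;\sigma]$, and let $S$ be the subring of $D(t;\sigma)$ generated by $D$, $t$ and $t^{-1}$. Then $S$ is automorphically normalizable over $D$ if and only if $\sigma$ is of finite inner order.
   Context: All rings are associative with unity. $D[t;\sigma]$ is the skew polynomial ring with $ta=\sigma(a)t$ for $a\in D$; it is an Ore domain, so it has a division ring of fractions. An automorphism $\sigma$ has finite inner order if $\sigma^k$ is an inner automorphism $r\mapsto crc^{-1}$ for some positive integer $k$ and $c\in D^\times$. For a ring $S\supseteq D$, $a\in S$ is automorphic over $D$ with respect to $\tau\in\mathrm{Aut}(D)$ if $ab=\tau(b)a$ for all $b\in D$. Commuting $a_1,\ldots,a_m\in S$ are (left) algebraically independent over $D$ if monomials in them are left linearly independent over $D$. $S$ is automorphically normalizable over $D$ if there exist $m\ge0$ and commuting $a_1,\ldots,a_m\in S$, automorphic over $D$ with respect to pairwise commuting automorphisms, left algebraically independent over $D$, such that $S$ is finitely generated as a left module over the subring $D[a_1,\ldots,a_m]$ generated by $D\cup\{a_1,\ldots,a_m\}$. *)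

theory Defs
  imports "HOL-Algebra.Algebra"
begin

definition division_ring :: "('a, 'b) ring_scheme \<Rightarrow> bool" where
  "division_ring K \<longleftrightarrow> ring K \<and> \<one>\<^bsub>K\<^esub> \<noteq> \<zero>\<^bsub>K\<^esub> \<and>
     (\<forall>x \<in> carrier K - {\<zero>\<^bsub>K\<^esub>}. x \<in> Units K)"

definition subdivring :: "'a set \<Rightarrow> ('a, 'b) ring_scheme \<Rightarrow> bool" where
  "subdivring D K \<longleftrightarrow> subring D K \<and> \<one>\<^bsub>K\<^esub> \<noteq> \<zero>\<^bsub>K\<^esub> \<and>
     (\<forall>x \<in> D - {\<zero>\<^bsub>K\<^esub>}. x \<in> Units K \<and> inv\<^bsub>K\<^esub> x \<in> D)"

definition ring_aut :: "('a, 'b) ring_scheme \<Rightarrow> 'a set \<Rightarrow> ('a \<Rightarrow> 'a) set" where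
  "ring_aut K D = ring_iso (K\<lparr>carrier := D\<rparr>) (K\<lparr>carrier := D\<rparr>)"

definition finite_inner_order :: "('a, 'b) ring_scheme \<Rightarrow> 'a set \<Rightarrow> ('a \<Rightarrow> 'a) \<Rightarrow> bool" where
  "finite_inner_order K D \<sigma> \<longleftrightarrow>
     (\<exists>k::nat. k > 0 \<and> (\<exists>c \<in> Units (K\<lparr>carrier := D\<rparr>).
        (\<forall>r \<in> D. (\<sigma> ^^ k) r = c \<otimes>\<^bsub>K\<^esub> r \<otimes>\<^bsub>K\<^esub> inv\<^bsub>K\<lparr>carrier := D\<rparr>\<^esub> c)))"

definition exps :: "nat \<Rightarrow> (nat \<Rightarrow> nat) set" where
  "exps m = {\<alpha>. \<forall>i\<ge>m. \<alpha> i = 0}"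

fun monomial :: "('a, 'b) ring_scheme \<Rightarrow> (nat \<Rightarrow> 'a) \<Rightarrow> (nat \<Rightarrow> nat) \<Rightarrow> nat \<Rightarrow> 'a" where
  "monomial K a \<alpha> 0 = \<one>\<^bsub>K\<^esub>"
| "monomial K a \<alpha> (Suc n) = monomial K a \<alpha> n \<otimes>\<^bsub>K\<^esub> (a n [^]\<^bsub>K\<^esub> \<alpha> n)"

definition left_alg_indep :: "('a, 'b) ring_scheme \<Rightarrow> 'a set \<Rightarrow> nat \<Rightarrow> (nat \<Rightarrow> 'a) \<Rightarrow> bool" where
  "left_alg_indep K D m a \<longleftrightarrow>
     (\<forall>F c. finite F \<longrightarrow> F \<subseteq> exps m \<longrightarrow> c ` F \<subseteq> D \<longrightarrow>
        finsum K (\<lambda>\<alpha>. c \<alpha> \<otimes>\<^bsub>K\<^esub> monomial K a \<alpha> m) F = \<zero>\<^bsub>K\<^esub> \<longrightarrow>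
        (\<forall>\<alpha> \<in> F. c \<alpha> = \<zero>\<^bsub>K\<^esub>))"

definition automorphic :: "('a, 'b) ring_scheme \<Rightarrow> 'a set \<Rightarrow> ('a \<Rightarrow> 'a) \<Rightarrow> 'a \<Rightarrow> bool" where
  "automorphic K D \<tau> a \<longleftrightarrow> (\<forall>b \<in> D. a \<otimes>\<^bsub>K\<^esub> b = \<tau> b \<otimes>\<^bsub>K\<^esub> a)"

definition fin_gen_left_module :: "('a, 'b) ring_scheme \<Rightarrow> 'a set \<Rightarrow> 'a set \<Rightarrow> bool" where
  "fin_gen_left_module K B S \<longleftrightarrow>
     (\<exists>G. finite G \<and> G \<subseteq> S \<and>
        S = {finsum K (\<lambda>g. c g \<otimes>\<^bsub>K\<^esub> g) G | c. c ` G \<subseteq> B})"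

definition automorphically_normalizable :: "('a, 'b) ring_scheme \<Rightarrow> 'a set \<Rightarrow> 'a set \<Rightarrow> bool" where
  "automorphically_normalizable K D S \<longleftrightarrow>
     (\<exists>(m::nat) (a::nat \<Rightarrow> 'a) (\<tau>::nat \<Rightarrow> 'a \<Rightarrow> 'a).
        (\<forall>i<m. a i \<in> S) \<and>
        (\<forall>i<m. \<forall>j<m. a i \<otimes>\<^bsub>K\<^esub> a j = a j \<otimes>\<^bsub>K\<^esub> a i) \<and>
        (\<forall>i<m. \<tau> i \<in> ring_aut K D \<and> automorphic K D (\<tau> i) (a i)) \<and>
        (\<forall>i<m. \<forall>j<m. \<forall>x \<in> D. \<tau> i (\<tau> j x) = \<tau> j (\<tau> i x)) \<and>
        left_alg_indep K D m a \<and>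
        fin_gen_left_module K (generate_ring K (D \<union> a ` {..<m})) S)"

text \<open>K is a division ring of (left) fractions of the skew polynomial ring D[t;sigma]:
  K is a division ring containing D as division subring and an element t with
  t a = sigma(a) t for a in D, whose powers are left linearly independent over D
  (so the subring generated by D and t is D[t;sigma]), and every element of K
  is a left fraction u^(-1) v with u, v in D[t;sigma], u nonzero.\<close>
definition skew_fraction_field ::
  "('a, 'b) ring_scheme \<Rightarrow> 'a set \<Rightarrow> ('a \<Rightarrow> 'a) \<Rightarrow> 'a \<Rightarrow> bool" where
  "skew_fraction_field K D \<sigma> t \<longleftrightarrow>
     division_ring K \<and> subdivring D K \<and> \<sigma> \<in> ring_aut K D \<and>
     t \<in> carrier K \<and>
     (\<forall>a \<in> D. t \<otimes>\<^bsub>K\<^esub> a = \<sigma> a \<otimes>\<^bsub>K\<^esub> t) \<and>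
     (\<forall>F c. finite F \<longrightarrow> c ` F \<subseteq> D \<longrightarrow>
        finsum K (\<lambda>n. c n \<otimes>\<^bsub>K\<^esub> (t [^]\<^bsub>K\<^esub> (n::nat))) F = \<zero>\<^bsub>K\<^esub> \<longrightarrow>
        (\<forall>n \<in> F. c n = \<zero>\<^bsub>K\<^esub>)) \<and>
     (\<forall>x \<in> carrier K. \<exists>u \<in> generate_ring K (D \<union> {t}). \<exists>v \<in> generate_ring K (D \<union> {t}).
        u \<noteq> \<zero>\<^bsub>K\<^esub> \<and> x = inv\<^bsub>K\<^esub> u \<otimes>\<^bsub>K\<^esub> v)"

end

theory Submission
  imports Defs
begin

locale lp = ring K for K (structure) +
  fixes D :: "'a set" and \<sigma> :: "'a \<Rightarrow> 'a" and t :: 'a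
  assumes units_ax: "\<And>x. x \<in> carrier K \<Longrightarrow> x \<noteq> \<zero> \<Longrightarrow> x \<in> Units K"
    and one_ne: "\<one> \<noteq> \<zero>"
    and sub: "subring D K"
    and Dinv: "\<And>x. x \<in> D \<Longrightarrow> x \<noteq> \<zero> \<Longrightarrow> inv x \<in> D"
    and sig: "\<sigma> \<in> ring_aut K D"
    and tc: "t \<in> carrier K"
    and tcomm: "\<And>a. a \<in> D \<Longrightarrow> t \<otimes> a = \<sigma> a \<otimes> t"
    and indep: "\<And>F c. finite F \<Longrightarrow> c ` F \<subseteq> D \<Longrightarrow>
        (\<Oplus>n\<in>F. c n \<otimes> t [^] (n::nat)) = \<zero> \<Longrightarrow> \<forall>n\<in>F. c n = \<zero>"
begin

lemma Dc: "D \<subseteq> carrier K" using subringE(1)[OF sub] .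
lemma Dc': "a \<in> D \<Longrightarrow> a \<in> carrier K" using Dc by auto
lemma D0: "\<zero> \<in> D" using subringE(2)[OF sub] .
lemma D1: "\<one> \<in> D" using subringE(3)[OF sub] .
lemma Dneg: "a \<in> D \<Longrightarrow> \<ominus> a \<in> D" using subringE(5)[OF sub] .
lemma Dmult: "a \<in> D \<Longrightarrow> b \<in> D \<Longrightarrow> a \<otimes> b \<in> D" using subringE(6)[OF sub] .
lemma Dadd: "a \<in> D \<Longrightarrow> b \<in> D \<Longrightarrow> a \<oplus> b \<in> D" using subringE(7)[OF sub] .

lemma nzprod: "a \<in> carrier K \<Longrightarrow> b \<in> carrier K \<Longrightarrow> a \<noteq> \<zero> \<Longrightarrow> b \<noteq> \<zero> \<Longrightarrow> a \<otimes> b \<noteq> \<zero>"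
proof
  assume a: "a \<in> carrier K" and b: "b \<in> carrier K" and "a \<noteq> \<zero>" "b \<noteq> \<zero>" "a \<otimes> b = \<zero>"
  then have U: "a \<in> Units K" using units_ax by auto
  have "b = inv a \<otimes> (a \<otimes> b)" using U a b by (simp add: m_assoc[symmetric])
  also have "\<dots> = \<zero>" using \<open>a \<otimes> b = \<zero>\<close> U by simp
  finally show False using \<open>b \<noteq> \<zero>\<close> by simp
qed

lemma sig_hom: "\<sigma> \<in> ring_hom (K\<lparr>carrier := D\<rparr>) (K\<lparr>carrier := D\<rparr>)"
  using sig unfolding ring_aut_def ring_iso_def by auto
lemma sig_bij: "bij_betw \<sigma> D D"
  using sig unfolding ring_aut_def ring_iso_def by auto
lemma sig_D: "a \<in> D \<Longrightarrow> \<sigma> a \<in> D"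
  using sig_hom unfolding ring_hom_def by auto
lemma sig_mult: "a \<in> D \<Longrightarrow> b \<in> D \<Longrightarrow> \<sigma> (a \<otimes> b) = \<sigma> a \<otimes> \<sigma> b"
  using sig_hom unfolding ring_hom_def by auto
lemma sig_add: "a \<in> D \<Longrightarrow> b \<in> D \<Longrightarrow> \<sigma> (a \<oplus> b) = \<sigma> a \<oplus> \<sigma> b"
  using sig_hom unfolding ring_hom_def by auto
lemma sig_one: "\<sigma> \<one> = \<one>"
  using sig_hom unfolding ring_hom_def by auto
lemma sig_zero: "\<sigma> \<zero> = \<zero>"
proof -
  have "\<sigma> \<zero> \<oplus> \<sigma> \<zero> = \<sigma> \<zero> \<oplus> \<zero>" using sig_add[OF D0 D0] sig_D[OF D0] Dc' by simp
  then show ?thesis using sig_D[OF D0] Dc' by (meson add.l_cancel zero_closed)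
qed
lemma sig_inj: "a \<in> D \<Longrightarrow> b \<in> D \<Longrightarrow> \<sigma> a = \<sigma> b \<Longrightarrow> a = b"
  using sig_bij unfolding bij_betw_def inj_on_def by auto
lemma sig_nz: "a \<in> D \<Longrightarrow> a \<noteq> \<zero> \<Longrightarrow> \<sigma> a \<noteq> \<zero>"
  using sig_inj[OF _ D0] sig_zero by auto

definition sig' where "sig' = inv_into D \<sigma>"
lemma sig'_D: "a \<in> D \<Longrightarrow> sig' a \<in> D"
  unfolding sig'_def using sig_bij by (metis bij_betw_def inv_into_into)
lemma sig_sig': "a \<in> D \<Longrightarrow> \<sigma> (sig' a) = a"
  unfolding sig'_def using sig_bij by (meson bij_betw_inv_into_right)
lemma sig'_sig: "a \<in> D \<Longrightarrow> sig' (\<sigma> a) = a"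
  unfolding sig'_def using sig_bij by (meson bij_betw_inv_into_left)

lemma sigp_D: "a \<in> D \<Longrightarrow> (\<sigma> ^^ n) a \<in> D"
  by (induct n) (auto simp: sig_D)
lemma sigp_mult: "a \<in> D \<Longrightarrow> b \<in> D \<Longrightarrow> (\<sigma> ^^ n) (a \<otimes> b) = (\<sigma> ^^ n) a \<otimes> (\<sigma> ^^ n) b"
  by (induct n) (auto simp: sig_mult sigp_D)
lemma sigp_nz: "a \<in> D \<Longrightarrow> a \<noteq> \<zero> \<Longrightarrow> (\<sigma> ^^ n) a \<noteq> \<zero>"
  by (induct n) (auto simp: sig_nz sigp_D)
lemma sig'p_D: "a \<in> D \<Longrightarrow> (sig' ^^ n) a \<in> D"
  by (induct n) (auto simp: sig'_D)
lemma sigp_sig'p: "a \<in> D \<Longrightarrow> (\<sigma> ^^ n) ((sig' ^^ n) a) = a"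
proof (induct n arbitrary: a)
  case (Suc n)
  have "(\<sigma> ^^ Suc n) ((sig' ^^ Suc n) a) = (\<sigma> ^^ n) (\<sigma> (sig' ((sig' ^^ n) a)))"
    by (simp only: funpow_Suc_right[of n \<sigma>] funpow.simps(2)[of n sig'] comp_apply)
  also have "\<dots> = a" using Suc by (simp add: sig_sig' sig'p_D)
  finally show ?case .
qed simp

lemma t_nz: "t \<noteq> \<zero>"
proof
  assume "t = \<zero>"
  have "(\<Oplus>n\<in>{1::nat}. (\<lambda>_. \<one>) n \<otimes> t [^] n) = \<zero>" using \<open>t = \<zero>\<close> by simp
  from indep[OF _ _ this] D1 show False using one_ne by auto
qed
lemma tU: "t \<in> Units K" using units_ax[OF tc t_nz] .
lemma uc: "inv t \<in> carrier K" using tU by simp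
lemma tu: "t \<otimes> inv t = \<one>" using tU by simp
lemma ut: "inv t \<otimes> t = \<one>" using tU by simp
lemma tpc: "t [^] (n::nat) \<in> carrier K" using tc by simp
lemma upc: "inv t [^] (n::nat) \<in> carrier K" using uc by simp
lemma pow_Suc_comm: "x \<in> carrier K \<Longrightarrow> x [^] (n::nat) \<otimes> x = x \<otimes> x [^] n"
  using nat_pow_Suc2[of x n] by simp
lemma tu2: "x \<in> carrier K \<Longrightarrow> t \<otimes> (inv t \<otimes> x) = x"
  using tc uc tu by (simp add: m_assoc[symmetric])
lemma ut2: "x \<in> carrier K \<Longrightarrow> inv t \<otimes> (t \<otimes> x) = x"
  using tc uc ut by (simp add: m_assoc[symmetric])
lemma tpup: "t [^] (n::nat) \<otimes> inv t [^] n = \<one>"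
proof (induct n)
  case (Suc n)
  have "t [^] Suc n \<otimes> inv t [^] Suc n = t [^] n \<otimes> (t \<otimes> (inv t \<otimes> inv t [^] n))"
    using tc uc by (simp add: m_assoc pow_Suc_comm[of "inv t"])
  also have "\<dots> = t [^] n \<otimes> inv t [^] n" using tu2 uc by simp
  also have "\<dots> = \<one>" using Suc by simp
  finally show ?case .
qed simp
lemma uptp: "inv t [^] (n::nat) \<otimes> t [^] n = \<one>"
proof (induct n)
  case (Suc n)
  have "inv t [^] Suc n \<otimes> t [^] Suc n = inv t [^] n \<otimes> (inv t \<otimes> (t \<otimes> t [^] n))"
    using tc uc by (simp add: m_assoc pow_Suc_comm[of t])
  also have "\<dots> = inv t [^] n \<otimes> t [^] n" using ut2 tc by simp
  also have "\<dots> = \<one>" using Suc by simp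
  finally show ?case .
qed simp

lemma tpcomm: "a \<in> D \<Longrightarrow> t [^] (n::nat) \<otimes> a = (\<sigma> ^^ n) a \<otimes> t [^] n"
proof (induct n arbitrary: a)
  case (Suc n)
  have "t [^] Suc n \<otimes> a = t [^] n \<otimes> (t \<otimes> a)" using Suc tc Dc' by (simp add: m_assoc)
  also have "\<dots> = (t [^] n \<otimes> \<sigma> a) \<otimes> t" using tcomm[OF Suc(2)] Suc(2) tc Dc' sig_D by (simp add: m_assoc)
  also have "\<dots> = (\<sigma> ^^ n) (\<sigma> a) \<otimes> t [^] Suc n" unfolding Suc(1)[OF sig_D[OF Suc(2)]]
    using  tc Dc' sig_D sigp_D Suc(2) by (simp add: m_assoc)
  finally show ?case by (simp add: funpow_Suc_right del: funpow.simps)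
qed (simp add: Dc')

lemma ucomm: "a \<in> D \<Longrightarrow> inv t \<otimes> a = sig' a \<otimes> inv t"
proof -
  assume a: "a \<in> D"
  have "t \<otimes> sig' a = a \<otimes> t" using tcomm[OF sig'_D[OF a]] sig_sig'[OF a] by simp
  then have "inv t \<otimes> (t \<otimes> sig' a) \<otimes> inv t = inv t \<otimes> (a \<otimes> t) \<otimes> inv t" by simp
  then show ?thesis using a sig'_D[OF a] Dc' tc uc tu ut by (simp add: m_assoc[symmetric]) (simp add: m_assoc)
qed

lemma uindep:
  assumes F: "finite F" and cF: "c ` F \<subseteq> D" and s: "(\<Oplus>n\<in>F. c n \<otimes> inv t [^] (n::nat)) = \<zero>"
  shows "\<forall>n\<in>F. c n = \<zero>"
proof -
  obtain N where N: "\<forall>i\<in>F. i \<le> N" using F finite_nat_set_iff_bounded_le by blast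
  have key: "inv t [^] i \<otimes> t [^] N = t [^] (N - i)" if "i \<le> N" for i
  proof -
    have "t [^] N = t [^] i \<otimes> t [^] (N - i)" using that tc by (simp add: nat_pow_mult)
    then have "inv t [^] i \<otimes> t [^] N = (inv t [^] i \<otimes> t [^] i) \<otimes> t [^] (N - i)"
      using tc uc by (simp add: m_assoc)
    then show ?thesis using uptp tc by simp
  qed
  have cc: "c n \<in> carrier K" if "n \<in> F" for n using cF that Dc' by auto
  have "\<zero> = (\<Oplus>n\<in>F. c n \<otimes> inv t [^] n) \<otimes> t [^] N" using s tc by simp
  also have "\<dots> = (\<Oplus>n\<in>F. c n \<otimes> inv t [^] n \<otimes> t [^] N)"
    by (rule finsum_ldistr) (use F tc uc cc in auto)
  also have "\<dots> = (\<Oplus>n\<in>F. c (N - (N - n)) \<otimes> t [^] (N - n))"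
    by (rule finsum_cong') (use N key cc tc uc in \<open>auto simp: m_assoc\<close>)
  also have "\<dots> = (\<Oplus>j\<in>(\<lambda>i. N - i) ` F. c (N - j) \<otimes> t [^] j)"
  proof (rule finsum_reindex[symmetric])
    show "(\<lambda>j. c (N - j) \<otimes> t [^] j) \<in> (\<lambda>i. N - i) ` F \<rightarrow> carrier K"
      using N cc tc by auto
    show "inj_on (\<lambda>i. N - i) F" using N by (intro inj_onI) (metis diff_diff_cancel)
  qed
  finally have z: "(\<Oplus>j\<in>(\<lambda>i. N - i) ` F. c (N - j) \<otimes> t [^] j) = \<zero>" by simp
  have "\<forall>j\<in>(\<lambda>i. N - i) ` F. c (N - j) = \<zero>"
    by (rule indep[OF _ _ z]) (use F cF N in auto)
  then show ?thesis using N by auto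
qed

lemma sig'_hom: "sig' \<in> ring_aut K D"
  unfolding ring_aut_def ring_iso_def ring_hom_def
proof (intro CollectI conjI)
  show "sig' \<in> carrier (K\<lparr>carrier := D\<rparr>) \<rightarrow> carrier (K\<lparr>carrier := D\<rparr>)" using sig'_D by auto
  show "\<forall>x y. x \<in> carrier (K\<lparr>carrier := D\<rparr>) \<and> y \<in> carrier (K\<lparr>carrier := D\<rparr>) \<longrightarrow>
        sig' (x \<otimes>\<^bsub>K\<lparr>carrier := D\<rparr>\<^esub> y) = sig' x \<otimes>\<^bsub>K\<lparr>carrier := D\<rparr>\<^esub> sig' y \<and>
        sig' (x \<oplus>\<^bsub>K\<lparr>carrier := D\<rparr>\<^esub> y) = sig' x \<oplus>\<^bsub>K\<lparr>carrier := D\<rparr>\<^esub> sig' y"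
  proof (intro allI impI conjI)
    fix x y assume "x \<in> carrier (K\<lparr>carrier := D\<rparr>) \<and> y \<in> carrier (K\<lparr>carrier := D\<rparr>)"
    then have x: "x \<in> D" and y: "y \<in> D" by auto
    show "sig' (x \<otimes>\<^bsub>K\<lparr>carrier := D\<rparr>\<^esub> y) = sig' x \<otimes>\<^bsub>K\<lparr>carrier := D\<rparr>\<^esub> sig' y"
      using sig_inj[of "sig' (x \<otimes> y)" "sig' x \<otimes> sig' y"] x y Dmult sig'_D sig_sig' sig_mult by simp
    show "sig' (x \<oplus>\<^bsub>K\<lparr>carrier := D\<rparr>\<^esub> y) = sig' x \<oplus>\<^bsub>K\<lparr>carrier := D\<rparr>\<^esub> sig' y"
      using sig_inj[of "sig' (x \<oplus> y)" "sig' x \<oplus> sig' y"] x y Dadd sig'_D sig_sig' sig_add by simp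
  qed
  show "sig' \<one>\<^bsub>K\<lparr>carrier := D\<rparr>\<^esub> = \<one>\<^bsub>K\<lparr>carrier := D\<rparr>\<^esub>"
    using sig'_sig[OF D1] sig_one by simp
  show "bij_betw sig' (carrier (K\<lparr>carrier := D\<rparr>)) (carrier (K\<lparr>carrier := D\<rparr>))"
    unfolding sig'_def using sig_bij bij_betw_inv_into by auto
qed

lemma lp_swap: "lp K D sig' (inv t)"
  apply (rule lp.intro[OF ring_axioms], rule lp_axioms.intro)
  using units_ax one_ne sub Dinv sig'_hom uc ucomm uindep by auto

lemma inv_u: "inv (inv t) = t"
  using tU by simp

definition pol :: "(nat \<Rightarrow> 'a) \<Rightarrow> nat set \<Rightarrow> 'a" where
  "pol c F = (\<Oplus>i\<in>F. c i \<otimes> t [^] i)"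
definition PP where "PP = {x. \<exists>c F. finite F \<and> c ` F \<subseteq> D \<and> x = pol c F}"
definition PL where "PL n = {x. \<exists>c F. finite F \<and> F \<subseteq> {..<n} \<and> c ` F \<subseteq> D \<and> x = pol c F}"

lemma imD: "c ` F \<subseteq> D \<Longrightarrow> i \<in> F \<Longrightarrow> c i \<in> D" by auto
lemma imC: "c ` F \<subseteq> D \<Longrightarrow> i \<in> F \<Longrightarrow> c i \<in> carrier K" using Dc by auto
lemma pol_fun: fixes c :: "nat \<Rightarrow> 'a" assumes "c ` F \<subseteq> D" shows "(\<lambda>i. c i \<otimes> t [^] i) \<in> F \<rightarrow> carrier K"
proof
  fix i assume "i \<in> F"
  then have "c i \<in> carrier K" using imC[OF assms] by simp
  then show "c i \<otimes> t [^] i \<in> carrier K" using tc by simp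
qed
lemma pol_closed: fixes c :: "nat \<Rightarrow> 'a" shows "c ` F \<subseteq> D \<Longrightarrow> pol c F \<in> carrier K"
  unfolding pol_def by (rule finsum_closed[OF pol_fun])

lemma pol_ext:
  assumes "finite F'" "F \<subseteq> F'" "c ` F \<subseteq> D"
  shows "pol c F = pol (\<lambda>i. if i \<in> F then c i else \<zero>) F'"
proof -
  have "\<And>i. i \<in> F \<Longrightarrow> c i \<in> carrier K" using imC[OF assms(3)] by simp
  then show ?thesis unfolding pol_def
    by (intro add.finprod_mono_neutral_cong_left) (use assms tc in auto)
qed

lemma pol_add:
  assumes "c ` F \<subseteq> D" "c' ` F \<subseteq> D"
  shows "pol (\<lambda>i. c i \<oplus> c' i) F = pol c F \<oplus> pol c' F"
proof -
  have imC: "\<And>i. i \<in> F \<Longrightarrow> c i \<in> carrier K" "\<And>i. i \<in> F \<Longrightarrow> c' i \<in> carrier K"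
    using imC[OF assms(1)] imC[OF assms(2)] by simp_all
  have "pol (\<lambda>i. c i \<oplus> c' i) F = (\<Oplus>i\<in>F. c i \<otimes> t [^] i \<oplus> c' i \<otimes> t [^] i)"
    unfolding pol_def by (rule finsum_cong') (use assms imC tc in \<open>auto simp: l_distr\<close>)
  also have "\<dots> = pol c F \<oplus> pol c' F"
    unfolding pol_def by (rule finsum_addf) (use assms imC tc in auto)
  finally show ?thesis .
qed

lemma pol_zero: "pol (\<lambda>i. \<zero>) F = \<zero>"
proof -
  have "pol (\<lambda>i. \<zero>) F = (\<Oplus>i\<in>F. \<zero>)"
    unfolding pol_def by (rule finsum_cong') (use tc in auto)
  then show ?thesis by simp
qed

lemma pol_neg:
  assumes "c ` F \<subseteq> D"
  shows "pol (\<lambda>i. \<ominus> c i) F = \<ominus> pol c F"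
proof -
  have imC: "\<And>i. i \<in> F \<Longrightarrow> c i \<in> carrier K" using imC[OF assms] by simp
  have nD: "(\<lambda>i. \<ominus> c i) ` F \<subseteq> D" using assms Dneg by auto
  have "pol c F \<oplus> pol (\<lambda>i. \<ominus> c i) F = pol (\<lambda>i. c i \<oplus> \<ominus> c i) F"
    using pol_add[OF assms nD] by simp
  also have "\<dots> = pol (\<lambda>i. \<zero>) F"
    unfolding pol_def by (rule finsum_cong') (use assms imC tc in \<open>auto simp: r_neg\<close>)
  finally have "pol c F \<oplus> pol (\<lambda>i. \<ominus> c i) F = \<zero>" using pol_zero by simp
  moreover have "pol (\<lambda>i. \<ominus> c i) F \<in> carrier K" using assms Dneg by (intro pol_closed) auto
  moreover have "pol c F \<in> carrier K" using pol_closed[OF assms] .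
  ultimately show ?thesis using minus_equality[where x = "pol c F" and y = "pol (\<lambda>i. \<ominus> c i) F"] add.m_comm
    by simp
qed

lemma pol_unique:
  assumes F: "finite F" "c ` F \<subseteq> D" and F': "finite F'" "c' ` F' \<subseteq> D"
    and eq: "pol c F = pol c' F'"
  shows "(if i \<in> F then c i else \<zero>) = (if i \<in> F' then c' i else \<zero>)"
proof -
  define G where "G = F \<union> F'"
  define e where "e = (\<lambda>i. if i \<in> F then c i else \<zero>)"
  define e' where "e' = (\<lambda>i. if i \<in> F' then c' i else \<zero>)"
  have G: "finite G" using F F' G_def by auto
  have eD: "e ` G \<subseteq> D" "e' ` G \<subseteq> D" using F F' D0 unfolding e_def e'_def by auto
  have "pol e G = pol e' G" using eq pol_ext[OF G _ F(2), of ] pol_ext[OF G _ F'(2)]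
    unfolding G_def e_def e'_def by auto
  then have "pol e G \<oplus> pol (\<lambda>i. \<ominus> e' i) G = \<zero>"
    using pol_neg[OF eD(2)] pol_closed[OF eD(2)] by (simp add: r_neg)
  then have "pol (\<lambda>i. e i \<oplus> \<ominus> e' i) G = \<zero>"
    using pol_add[OF eD(1), of "\<lambda>i. \<ominus> e' i"] eD Dneg by auto
  moreover have "(\<lambda>i. e i \<oplus> \<ominus> e' i) ` G \<subseteq> D"
    by (auto intro!: Dadd Dneg imD[OF eD(1)] imD[OF eD(2)])
  ultimately have "\<forall>i\<in>G. e i \<oplus> \<ominus> e' i = \<zero>"
    using indep[OF G, of "\<lambda>i. e i \<oplus> \<ominus> e' i"] unfolding pol_def by blast
  then have "\<forall>i\<in>G. e i = e' i"
  proof (intro ballI)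
    fix i assume "\<forall>i\<in>G. e i \<oplus> \<ominus> e' i = \<zero>" "i \<in> G"
    moreover have "e i \<in> carrier K" "e' i \<in> carrier K" using eD \<open>i \<in> G\<close> Dc by auto
    ultimately show "e i = e' i" using minus_equality[of "e i" "\<ominus> e' i"] by simp
  qed
  moreover have "i \<notin> G \<Longrightarrow> e i = e' i" unfolding e_def e'_def G_def by auto
  ultimately show ?thesis unfolding e_def e'_def by metis
qed

lemma PP_c: "x \<in> PP \<Longrightarrow> x \<in> carrier K"
  unfolding PP_def using pol_closed by auto

lemma mon_pol: "d \<in> D \<Longrightarrow> pol (\<lambda>_. d) {n} = d \<otimes> t [^] (n::nat)"
  unfolding pol_def using Dc' tc by simp

lemma PPI: "finite F \<Longrightarrow> c ` F \<subseteq> D \<Longrightarrow> x = pol c F \<Longrightarrow> x \<in> PP"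
  unfolding PP_def by auto
lemma mon_PP: "d \<in> D \<Longrightarrow> d \<otimes> t [^] (n::nat) \<in> PP"
  by (rule PPI[of "{n}" "\<lambda>_. d"]) (auto simp: mon_pol)

lemma PP_zero: "\<zero> \<in> PP"
  by (rule PPI[of "{}" "\<lambda>_. \<zero>"]) (auto simp: pol_def)

lemma PP_add: assumes "x \<in> PP" "y \<in> PP" shows "x \<oplus> y \<in> PP"
proof -
  obtain c F where c: "finite F" "c ` F \<subseteq> D" "x = pol c F" using assms(1) unfolding PP_def by auto
  obtain e G where e: "finite G" "e ` G \<subseteq> D" "y = pol e G" using assms(2) unfolding PP_def by auto
  define H where "H = F \<union> G"
  have H: "finite H" using c e H_def by auto
  define c' where "c' = (\<lambda>i. if i \<in> F then c i else \<zero>)"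
  define e' where "e' = (\<lambda>i. if i \<in> G then e i else \<zero>)"
  have D': "c' ` H \<subseteq> D" "e' ` H \<subseteq> D" using c(2) e(2) D0 unfolding c'_def e'_def by auto
  have x: "x = pol c' H" unfolding c(3) c'_def by (rule pol_ext[OF H _ c(2)]) (simp add: H_def)
  have y: "y = pol e' H" unfolding e(3) e'_def by (rule pol_ext[OF H _ e(2)]) (simp add: H_def)
  have "x \<oplus> y = pol (\<lambda>i. c' i \<oplus> e' i) H" unfolding x y using pol_add[OF D'] by simp
  moreover have "(\<lambda>i. c' i \<oplus> e' i) ` H \<subseteq> D"
    by (auto intro!: Dadd imD[OF D'(1)] imD[OF D'(2)])
  ultimately show ?thesis using PPI[OF H] by blast
qed

lemma PP_finsum: assumes "finite A" "\<And>a. a \<in> A \<Longrightarrow> f a \<in> PP" shows "finsum K f A \<in> PP"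
  using assms
proof (induct A rule: finite_induct)
  case empty then show ?case using PP_zero by simp
next
  case (insert a A)
  have "finsum K f (insert a A) = f a \<oplus> finsum K f A"
    by (rule finsum_insert) (use insert PP_c in auto)
  then show ?case using insert PP_add by auto
qed

lemma monmul: "a \<in> D \<Longrightarrow> b \<in> D \<Longrightarrow>
   (a \<otimes> t [^] (i::nat)) \<otimes> (b \<otimes> t [^] j) = (a \<otimes> (\<sigma> ^^ i) b) \<otimes> t [^] (i + j)"
proof -
  assume a: "a \<in> D" and b: "b \<in> D"
  have "(a \<otimes> t [^] i) \<otimes> (b \<otimes> t [^] j) = a \<otimes> (t [^] i \<otimes> b) \<otimes> t [^] j"
    using a b Dc' tc by (simp add: m_assoc)
  also have "\<dots> = a \<otimes> ((\<sigma> ^^ i) b \<otimes> t [^] i) \<otimes> t [^] j" using tpcomm[OF b] by simp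
  also have "\<dots> = (a \<otimes> (\<sigma> ^^ i) b) \<otimes> (t [^] i \<otimes> t [^] j)"
    using a b Dc' tc sigp_D by (simp add: m_assoc)
  finally show ?thesis using tc by (simp add: nat_pow_mult)
qed

lemma PP_mult: assumes "x \<in> PP" "y \<in> PP" shows "x \<otimes> y \<in> PP"
proof -
  obtain c F where c: "finite F" "c ` F \<subseteq> D" "x = pol c F" using assms(1) unfolding PP_def by auto
  obtain e G where e: "finite G" "e ` G \<subseteq> D" "y = pol e G" using assms(2) unfolding PP_def by auto
  have yc: "y \<in> carrier K" using assms PP_c by auto
  have "x \<otimes> y = (\<Oplus>i\<in>F. (c i \<otimes> t [^] i) \<otimes> y)"
    unfolding c(3) pol_def by (rule finsum_ldistr) (use c yc Dc' tc in auto)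
  also have "\<dots> \<in> PP"
  proof (rule PP_finsum[OF c(1)])
    fix i assume i: "i \<in> F"
    have "(c i \<otimes> t [^] i) \<otimes> y = (\<Oplus>j\<in>G. (c i \<otimes> t [^] i) \<otimes> (e j \<otimes> t [^] j))"
      unfolding e(3) pol_def by (rule finsum_rdistr) (use i c e Dc' tc in auto)
    also have "\<dots> \<in> PP"
    proof (rule PP_finsum[OF e(1)])
      fix j assume j: "j \<in> G"
      show "(c i \<otimes> t [^] i) \<otimes> (e j \<otimes> t [^] j) \<in> PP"
        using monmul[OF imD[OF c(2) i] imD[OF e(2) j]]
          mon_PP[OF Dmult[OF imD[OF c(2) i] sigp_D[OF imD[OF e(2) j]]]] by simp
    qed
    finally show "(c i \<otimes> t [^] i) \<otimes> y \<in> PP" .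
  qed
  finally show ?thesis .
qed

lemma D_PP: "d \<in> D \<Longrightarrow> d \<in> PP"
  using mon_PP[of d 0] Dc' by simp
lemma tp_PP: "t [^] (n::nat) \<in> PP"
  using mon_PP[OF D1, of n] tc by simp
lemma t_PP: "t \<in> PP"
  using tp_PP[of 1] tc by simp
lemma PP_neg: "x \<in> PP \<Longrightarrow> \<ominus> x \<in> PP"
proof -
  assume x: "x \<in> PP"
  have "\<ominus> x = (\<ominus> \<one>) \<otimes> x" using PP_c[OF x] by (simp add: l_minus)
  then show ?thesis using PP_mult[OF D_PP[OF Dneg[OF D1]] x] by simp
qed

lemma PP_conj: assumes x: "x \<in> PP" shows "inv t [^] (N::nat) \<otimes> x \<otimes> t [^] N \<in> PP"
proof -
  obtain c F where c: "finite F" "c ` F \<subseteq> D" "x = pol c F" using x unfolding PP_def by auto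
  have "inv t [^] N \<otimes> x = (\<Oplus>i\<in>F. inv t [^] N \<otimes> (c i \<otimes> t [^] i))"
    unfolding c(3) pol_def by (rule finsum_rdistr) (use c uc Dc' tc in auto)
  then have "inv t [^] N \<otimes> x \<otimes> t [^] N = (\<Oplus>i\<in>F. inv t [^] N \<otimes> (c i \<otimes> t [^] i)) \<otimes> t [^] N" by simp
  also have "\<dots> = (\<Oplus>i\<in>F. inv t [^] N \<otimes> (c i \<otimes> t [^] i) \<otimes> t [^] N)"
    by (rule finsum_ldistr) (use c uc Dc' tc in auto)
  also have "\<dots> \<in> PP"
  proof (rule PP_finsum[OF c(1)])
    fix i assume i: "i \<in> F"
    then have ci: "c i \<in> D" using c by auto
    have "inv t [^] N \<otimes> (c i \<otimes> t [^] i) \<otimes> t [^] N = (inv t [^] N \<otimes> c i) \<otimes> (t [^] i \<otimes> t [^] N)"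
      using ci Dc' uc tc by (simp add: m_assoc)
    also have "\<dots> = ((sig' ^^ N) (c i) \<otimes> inv t [^] N) \<otimes> (t [^] N \<otimes> t [^] i)"
      using lp.tpcomm[OF lp_swap ci, of N] nat_pow_comm[OF tc, of i N] by simp
    also have "\<dots> = (sig' ^^ N) (c i) \<otimes> (inv t [^] N \<otimes> t [^] N) \<otimes> t [^] i"
      using ci Dc' uc tc sig'p_D by (simp add: m_assoc)
    also have "\<dots> = (sig' ^^ N) (c i) \<otimes> t [^] i" using uptp ci Dc' sig'p_D tc by simp
    finally show "inv t [^] N \<otimes> (c i \<otimes> t [^] i) \<otimes> t [^] N \<in> PP"
      using mon_PP[OF sig'p_D[OF ci]] by simp
  qed
  finally show ?thesis .
qed

definition S where "S = generate_ring K (D \<union> {t, inv t})"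
lemma gens_c: "D \<union> {t, inv t} \<subseteq> carrier K" using Dc tc uc by auto
lemma S_c: "S \<subseteq> carrier K" unfolding S_def using generate_ring_incl[OF gens_c] .
lemma S_sub: "subring S K" unfolding S_def using generate_ring_is_subring[OF gens_c] .
lemma S_D: "D \<subseteq> S" unfolding S_def by (auto intro: generate_ring.incl)
lemma S_t: "t \<in> S" unfolding S_def by (auto intro: generate_ring.incl)
lemma S_u: "inv t \<in> S" unfolding S_def by (auto intro: generate_ring.incl)
lemma S_mult: "x \<in> S \<Longrightarrow> y \<in> S \<Longrightarrow> x \<otimes> y \<in> S" using subringE(6)[OF S_sub] .
lemma S_add: "x \<in> S \<Longrightarrow> y \<in> S \<Longrightarrow> x \<oplus> y \<in> S" using subringE(7)[OF S_sub] .
lemma S_pow: "x \<in> S \<Longrightarrow> x [^] (n::nat) \<in> S"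
  by (induct n) (auto intro: S_mult subringE(3)[OF S_sub])

lemma S_PP: assumes "x \<in> S" shows "\<exists>N. x \<otimes> t [^] (N::nat) \<in> PP"
  using assms unfolding S_def
proof (induct rule: generate_ring.induct)
  case one then show ?case using D_PP[OF D1] by (intro exI[of _ 0]) simp
next
  case (incl h)
  then consider "h \<in> D" | "h = t" | "h = inv t" by auto
  then show ?case
  proof cases
    case 1 then show ?thesis using D_PP Dc' by (intro exI[of _ 0]) simp
  next
    case 2 then show ?thesis using t_PP tc by (intro exI[of _ 0]) simp
  next
    case 3 then show ?thesis using D_PP[OF D1] ut tc by (intro exI[of _ 1]) simp
  qed
next
  case (a_inv h)
  then obtain N where N: "h \<otimes> t [^] (N::nat) \<in> PP" by auto
  have hc: "h \<in> carrier K" using a_inv(1) generate_ring_in_carrier[OF gens_c] by auto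
  have "\<ominus> h \<otimes> t [^] N = \<ominus> (h \<otimes> t [^] N)" using hc tc by (simp add: l_minus)
  then show ?case using PP_neg[OF N] by metis
next
  case (eng_add h1 h2)
  then obtain N1 N2 where N: "h1 \<otimes> t [^] (N1::nat) \<in> PP" "h2 \<otimes> t [^] (N2::nat) \<in> PP" by auto
  have hc: "h1 \<in> carrier K" "h2 \<in> carrier K"
    using eng_add generate_ring_in_carrier[OF gens_c] by auto
  have "(h1 \<oplus> h2) \<otimes> t [^] (N1 + N2) = (h1 \<otimes> t [^] N1) \<otimes> t [^] N2 \<oplus> (h2 \<otimes> t [^] N2) \<otimes> t [^] N1"
    using hc tc by (simp add: l_distr m_assoc nat_pow_mult add.commute[of N1 N2])
  then show ?case using N PP_add PP_mult tp_PP by metis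
next
  case (eng_mult h1 h2)
  then obtain N1 N2 where N: "h1 \<otimes> t [^] (N1::nat) \<in> PP" "h2 \<otimes> t [^] (N2::nat) \<in> PP" by auto
  have hc: "h1 \<in> carrier K" "h2 \<in> carrier K"
    using eng_mult generate_ring_in_carrier[OF gens_c] by auto
  have "(h1 \<otimes> h2) \<otimes> t [^] (N2 + N1) = (h1 \<otimes> t [^] N1) \<otimes> (inv t [^] N1 \<otimes> (h2 \<otimes> t [^] N2) \<otimes> t [^] N1)"
  proof -
    have "(h1 \<otimes> t [^] N1) \<otimes> (inv t [^] N1 \<otimes> (h2 \<otimes> t [^] N2) \<otimes> t [^] N1)
        = h1 \<otimes> (t [^] N1 \<otimes> inv t [^] N1) \<otimes> h2 \<otimes> (t [^] N2 \<otimes> t [^] N1)"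
      using hc tc uc by (simp add: m_assoc)
    also have "\<dots> = (h1 \<otimes> h2) \<otimes> t [^] (N2 + N1)"
      using hc tc tpup by (simp add: m_assoc nat_pow_mult)
    finally show ?thesis by simp
  qed
  then show ?case using N PP_mult PP_conj by metis
qed

lemma u_notin_PP: "inv t \<notin> PP"
proof
  assume "inv t \<in> PP"
  then obtain c F where c: "finite F" "c ` F \<subseteq> D" "inv t = pol c F" unfolding PP_def by auto
  have cC: "\<And>i. i \<in> F \<Longrightarrow> c i \<in> carrier K" using imC[OF c(2)] by simp
  have "\<one> = pol c F \<otimes> t" using c(3) ut by simp
  also have "\<dots> = (\<Oplus>i\<in>F. c i \<otimes> t [^] i \<otimes> t)"
    unfolding pol_def by (rule finsum_ldistr) (use c(1) cC tc in auto)
  also have "\<dots> = (\<Oplus>i\<in>F. c (Suc i - 1) \<otimes> t [^] (Suc i))"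
    by (rule finsum_cong') (use cC tc in \<open>auto simp: m_assoc\<close>)
  also have "\<dots> = (\<Oplus>j\<in>Suc ` F. c (j - 1) \<otimes> t [^] j)"
    by (rule finsum_reindex[symmetric]) (use cC tc in auto)
  finally have e1: "\<one> = pol (\<lambda>j. c (j - 1)) (Suc ` F)" unfolding pol_def .
  have e2: "\<one> = pol (\<lambda>_. \<one>) {0}" using mon_pol[OF D1, of 0] by simp
  have cD: "(\<lambda>j. c (j - 1)) ` Suc ` F \<subseteq> D" using c(2) by auto
  have "(if (0::nat) \<in> {0} then \<one> else \<zero>) = (if (0::nat) \<in> Suc ` F then c (0 - 1) else \<zero>)"
    by (rule pol_unique[of "{0}" "\<lambda>_. \<one>" "Suc ` F" "\<lambda>j. c (j - 1)"]) (use c(1) D1 cD e1 e2 in auto)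
  then show False using one_ne by auto
qed

lemma nonfg:
  assumes A: "A \<subseteq> PP"
  shows "\<not> fin_gen_left_module K (generate_ring K (D \<union> A)) S"
proof
  define B where "B = generate_ring K (D \<union> A)"
  assume "fin_gen_left_module K (generate_ring K (D \<union> A)) S"
  then obtain G where G: "finite G" "G \<subseteq> S"
    and SG: "S = {finsum K (\<lambda>g. cc g \<otimes> g) G | cc. cc ` G \<subseteq> B}"
    unfolding fin_gen_left_module_def B_def by blast
  have BP: "B \<subseteq> PP"
  proof
    fix x assume "x \<in> B"
    then show "x \<in> PP" unfolding B_def
    proof (induct rule: generate_ring.induct)
      case one then show ?case using D_PP[OF D1] .
    next
      case (incl h) then show ?case using D_PP A by auto
    next
      case (a_inv h) then show ?case using PP_neg by auto
    next
      case (eng_add h1 h2) then show ?case using PP_add by auto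
    next
      case (eng_mult h1 h2) then show ?case using PP_mult by auto
    qed
  qed
  have "G' \<subseteq> S \<longrightarrow> (\<exists>N::nat. \<forall>g\<in>G'. g \<otimes> t [^] N \<in> PP)" if "finite G'" for G'
    using that
  proof (induct rule: finite_induct)
    case empty then show ?case by simp
  next
    case (insert g G')
    show ?case
    proof
      assume sub: "insert g G' \<subseteq> S"
      then obtain N :: nat where N: "\<forall>g\<in>G'. g \<otimes> t [^] N \<in> PP" using insert by auto
      obtain N' where N': "g \<otimes> t [^] (N'::nat) \<in> PP" using S_PP sub by auto
      have "\<forall>h\<in>insert g G'. h \<otimes> t [^] (N' + N) \<in> PP"
      proof
        fix h assume h: "h \<in> insert g G'"
        then have hc: "h \<in> carrier K" using sub S_c by auto
        show "h \<otimes> t [^] (N' + N) \<in> PP"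
        proof (cases "h = g")
          case True
          have "h \<otimes> t [^] (N' + N) = (h \<otimes> t [^] N') \<otimes> t [^] N"
            using hc tc by (simp add: m_assoc nat_pow_mult)
          then show ?thesis using N' True PP_mult tp_PP by simp
        next
          case False
          have "h \<otimes> t [^] (N' + N) = (h \<otimes> t [^] N) \<otimes> t [^] N'"
            using hc tc by (simp add: m_assoc nat_pow_mult add.commute)
          then show ?thesis using N False h PP_mult tp_PP by simp
        qed
      qed
      then show "\<exists>N::nat. \<forall>h\<in>insert g G'. h \<otimes> t [^] N \<in> PP" by blast
    qed
  qed
  then obtain N :: nat where N: "\<forall>g\<in>G. g \<otimes> t [^] N \<in> PP" using G by blast
  have "inv t [^] Suc N \<in> S" using S_pow[OF S_u] .
  then obtain cc where cc: "cc ` G \<subseteq> B" "inv t [^] Suc N = finsum K (\<lambda>g. cc g \<otimes> g) G"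
    using SG by blast
  have ccC: "\<And>g. g \<in> G \<Longrightarrow> cc g \<in> carrier K" using cc(1) BP PP_c by auto
  have gC: "\<And>g. g \<in> G \<Longrightarrow> g \<in> carrier K" using G(2) S_c by auto
  have "inv t [^] Suc N \<otimes> t [^] N = (\<Oplus>g\<in>G. cc g \<otimes> g \<otimes> t [^] N)"
    unfolding cc(2) by (rule finsum_ldistr) (use G(1) ccC gC tc in auto)
  also have "\<dots> \<in> PP"
  proof (rule PP_finsum[OF G(1)])
    fix g assume g: "g \<in> G"
    have "cc g \<otimes> g \<otimes> t [^] N = cc g \<otimes> (g \<otimes> t [^] N)" using ccC[OF g] gC[OF g] tc by (simp add: m_assoc)
    then show "cc g \<otimes> g \<otimes> t [^] N \<in> PP" using PP_mult[of "cc g" "g \<otimes> t [^] N"] N g cc(1) BP by auto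
  qed
  finally have "inv t [^] Suc N \<otimes> t [^] N \<in> PP" .
  moreover have "inv t [^] Suc N \<otimes> t [^] N = inv t"
  proof -
    have "inv t [^] Suc N \<otimes> t [^] N = inv t \<otimes> (inv t [^] N \<otimes> t [^] N)"
      using uc tc by (simp add: m_assoc pow_Suc_comm[of "inv t"])
    then show ?thesis using uptp uc by simp
  qed
  ultimately show False using u_notin_PP by simp
qed

lemma submon: "submonoid D K" using sub subring.axioms(2) by blast

lemma fio_intro:
  assumes k: "0 < k" and e: "e \<in> D" "e \<noteq> \<zero>" and r: "\<forall>r\<in>D. (\<sigma> ^^ k) r = e \<otimes> r \<otimes> inv e"
  shows "finite_inner_order K D \<sigma>"
proof -
  have eU: "e \<in> Units K" using units_ax[OF Dc'[OF e(1)] e(2)] .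
  have ie: "inv e \<in> D" using Dinv e by simp
  have eU': "e \<in> Units (K\<lparr>carrier := D\<rparr>)"
    unfolding Units_def using e(1) ie eU by (auto intro!: bexI[of _ "inv e"])
  have "inv\<^bsub>K\<lparr>carrier := D\<rparr>\<^esub> e = inv e" using m_inv_monoid_consistent[OF eU' submon] .
  then show ?thesis unfolding finite_inner_order_def
    apply (intro exI[of _ k] conjI k bexI[of _ e] eU')
    using r by simp
qed

lemma fio_elim:
  assumes "finite_inner_order K D \<sigma>"
  obtains k c where "0 < k" "c \<in> D" "c \<noteq> \<zero>" "inv c \<in> D" "c \<in> Units K"
     "\<forall>r\<in>D. (\<sigma> ^^ k) r = c \<otimes> r \<otimes> inv c"
proof -
  obtain k c where k: "0 < k" and cU: "c \<in> Units (K\<lparr>carrier := D\<rparr>)"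
    and r: "\<forall>r\<in>D. (\<sigma> ^^ k) r = c \<otimes> r \<otimes> inv\<^bsub>K\<lparr>carrier := D\<rparr>\<^esub> c"
    using assms unfolding finite_inner_order_def by auto
  have ic: "inv\<^bsub>K\<lparr>carrier := D\<rparr>\<^esub> c = inv c" using m_inv_monoid_consistent[OF cU submon] .
  from cU obtain x where x: "c \<in> D" "x \<in> D" "x \<otimes> c = \<one>" "c \<otimes> x = \<one>" unfolding Units_def by auto
  have cKU: "c \<in> Units K" unfolding Units_def using x Dc' by auto
  have "x = inv c" using inv_unique'[of c x] x Dc' by simp
  then have "inv c \<in> D" using x by simp
  moreover have "c \<noteq> \<zero>" using x one_ne Dc' by auto
  ultimately show ?thesis using that k x(1) cKU r ic by auto
qed

lemma conj_solve:
  assumes a: "a \<in> carrier K" "a \<noteq> \<zero>" and y: "y \<in> carrier K" and z: "z \<in> carrier K"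
    and eq: "a \<otimes> y = z \<otimes> a"
  shows "y = inv a \<otimes> z \<otimes> a" and "z = a \<otimes> y \<otimes> inv a"
proof -
  have aU: "a \<in> Units K" using units_ax a by simp
  have "inv a \<otimes> (a \<otimes> y) = y" using aU a y by (simp add: m_assoc[symmetric])
  then show "y = inv a \<otimes> z \<otimes> a" using eq aU a z by (simp add: m_assoc)
  have "(z \<otimes> a) \<otimes> inv a = z" using aU a z by (simp add: m_assoc)
  then show "z = a \<otimes> y \<otimes> inv a" using eq by simp
qed

lemma auto_form:
  assumes nf: "\<not> finite_inner_order K D \<sigma>" and x: "x \<in> S"
    and au: "\<forall>b\<in>D. x \<otimes> b = \<tau> b \<otimes> x" and tD: "\<forall>b\<in>D. \<tau> b \<in> D"
  shows "\<exists>e\<in>D. \<exists>n::nat. x = e \<otimes> t [^] n \<or> x = e \<otimes> inv t [^] n"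
proof -
  have xc: "x \<in> carrier K" using x S_c by auto
  obtain N :: nat where "x \<otimes> t [^] N \<in> PP" using S_PP[OF x] by auto
  then obtain c F where c: "finite F" "c ` F \<subseteq> D" and xN: "x \<otimes> t [^] N = pol c F"
    unfolding PP_def by auto
  have cD: "\<And>i. i \<in> F \<Longrightarrow> c i \<in> D" using imD[OF c(2)] .
  have key: "c j \<otimes> (\<sigma> ^^ j) b = \<tau> ((\<sigma> ^^ N) b) \<otimes> c j" if b: "b \<in> D" and j: "j \<in> F" for b j
  proof -
    define T where "T = \<tau> ((\<sigma> ^^ N) b)"
    have TD: "T \<in> D" unfolding T_def using tD sigp_D b by auto
    have bc: "b \<in> carrier K" using b Dc' by simp
    have "x \<otimes> t [^] N \<otimes> b = (\<Oplus>i\<in>F. c i \<otimes> t [^] i \<otimes> b)"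
      unfolding xN pol_def by (rule finsum_ldistr) (use c(1) cD Dc' tc bc in auto)
    also have "\<dots> = pol (\<lambda>i. c i \<otimes> (\<sigma> ^^ i) b) F"
      unfolding pol_def
      by (rule finsum_cong') (use cD Dc' tc b tpcomm sigp_D in \<open>auto simp: m_assoc\<close>)
    finally have e1: "x \<otimes> t [^] N \<otimes> b = pol (\<lambda>i. c i \<otimes> (\<sigma> ^^ i) b) F" .
    have "x \<otimes> t [^] N \<otimes> b = (x \<otimes> (\<sigma> ^^ N) b) \<otimes> t [^] N"
      using xc tc b Dc' sigp_D tpcomm[OF b, of N] by (simp add: m_assoc)
    also have "\<dots> = T \<otimes> (x \<otimes> t [^] N)"
      unfolding T_def using au sigp_D[OF b, of N] xc tc Dc' tD by (simp add: m_assoc)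
    also have "\<dots> = (\<Oplus>i\<in>F. T \<otimes> (c i \<otimes> t [^] i))"
      unfolding xN pol_def by (rule finsum_rdistr) (use c(1) cD Dc' tc TD in auto)
    also have "\<dots> = pol (\<lambda>i. T \<otimes> c i) F"
      unfolding pol_def by (rule finsum_cong') (use cD Dc' tc TD in \<open>auto simp: m_assoc\<close>)
    finally have e2: "x \<otimes> t [^] N \<otimes> b = pol (\<lambda>i. T \<otimes> c i) F" .
    have D1': "(\<lambda>i. c i \<otimes> (\<sigma> ^^ i) b) ` F \<subseteq> D" using cD b sigp_D Dmult by auto
    have D2': "(\<lambda>i. T \<otimes> c i) ` F \<subseteq> D" using cD TD Dmult by auto
    have "(if j \<in> F then c j \<otimes> (\<sigma> ^^ j) b else \<zero>) = (if j \<in> F then T \<otimes> c j else \<zero>)"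
      by (rule pol_unique[OF c(1) D1' c(1) D2']) (use e1 e2 in simp)
    then show ?thesis using j T_def by simp
  qed
  have single: "i = i'" if i: "i \<in> F" "c i \<noteq> \<zero>" and i': "i' \<in> F" "c i' \<noteq> \<zero>" and lt: "i < i'" for i i'
  proof -
    define a where "a = c i"
    define a' where "a' = c i'"
    have aD: "a \<in> D" "a' \<in> D" using cD i i' a_def a'_def by auto
    have aC: "a \<in> carrier K" "a' \<in> carrier K" using aD Dc' by auto
    have anz: "a \<noteq> \<zero>" "a' \<noteq> \<zero>" using i i' a_def a'_def by auto
    have aU: "a \<in> Units K" "a' \<in> Units K" using units_ax aC anz by auto
    define e where "e = inv a' \<otimes> a"
    have eD: "e \<in> D" unfolding e_def using Dinv aD anz Dmult by auto
    have ia'nz: "inv a' \<noteq> \<zero>"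
    proof
      assume "inv a' = \<zero>"
      then have "inv a' \<otimes> a' = \<zero>" using aC by simp
      then show False using aU one_ne by simp
    qed
    have enz: "e \<noteq> \<zero>" unfolding e_def using nzprod[OF _ aC(1) ia'nz anz(1)] aU by simp
    have ieq: "inv e = inv a \<otimes> a'"
    proof -
      have "e \<otimes> (inv a \<otimes> a') = \<one>" unfolding e_def using aU aC
        by (simp add: m_assoc) (simp add: m_assoc[symmetric])
      moreover have "(inv a \<otimes> a') \<otimes> e = \<one>" unfolding e_def using aU aC
        by (simp add: m_assoc) (simp add: m_assoc[symmetric])
      ultimately show ?thesis using inv_unique'[of e "inv a \<otimes> a'"] eD Dc' aU aC by simp
    qed
    have "\<forall>r\<in>D. (\<sigma> ^^ (i' - i)) r = e \<otimes> r \<otimes> inv e"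
    proof
      fix r assume r: "r \<in> D"
      define b where "b = (sig' ^^ i) r"
      have bD: "b \<in> D" unfolding b_def using sig'p_D r by simp
      have sb: "(\<sigma> ^^ i) b = r" unfolding b_def using sigp_sig'p r by simp
      have sb': "(\<sigma> ^^ i') b = (\<sigma> ^^ (i' - i)) r"
      proof -
        have "(\<sigma> ^^ i') = (\<sigma> ^^ (i' - i)) \<circ> (\<sigma> ^^ i)" using lt funpow_add[of "i' - i" i \<sigma>] by simp
        then show ?thesis using sb by simp
      qed
      define T where "T = \<tau> ((\<sigma> ^^ N) b)"
      have TD: "T \<in> D" unfolding T_def using tD sigp_D bD by auto
      have k1: "a \<otimes> r = T \<otimes> a" using key[OF bD i(1)] sb a_def T_def by simp
      have k2: "a' \<otimes> (\<sigma> ^^ (i' - i)) r = T \<otimes> a'" using key[OF bD i'(1)] sb' a'_def T_def by simp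
      have T: "T = a \<otimes> r \<otimes> inv a" using conj_solve(2)[OF aC(1) anz(1) _ _ k1] r TD Dc' by simp
      have "(\<sigma> ^^ (i' - i)) r = inv a' \<otimes> T \<otimes> a'"
        using conj_solve(1)[OF aC(2) anz(2) _ _ k2] r TD Dc' sigp_D by simp
      also have "\<dots> = e \<otimes> r \<otimes> inv e" unfolding T ieq unfolding e_def using aU aC r Dc'
        by (simp add: m_assoc)
      finally show "(\<sigma> ^^ (i' - i)) r = e \<otimes> r \<otimes> inv e" .
    qed
    then have "finite_inner_order K D \<sigma>" using fio_intro[OF _ eD enz, of "i' - i"] lt by simp
    then show ?thesis using nf by simp
  qed
  define F0 where "F0 = {i \<in> F. c i \<noteq> \<zero>}"
  have F0s: "i = i'" if "i \<in> F0" "i' \<in> F0" for i i'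
  proof (cases i i' rule: linorder_cases)
    case less then show ?thesis using single that unfolding F0_def by auto
  next
    case greater then show ?thesis using single that unfolding F0_def by auto
  qed
  have F0F: "F0 \<subseteq> F" unfolding F0_def by auto
  have "pol c F0 = pol (\<lambda>i. if i \<in> F0 then c i else \<zero>) F"
    using pol_ext[OF c(1) F0F] c(2) F0F by auto
  also have "\<dots> = pol c F"
    unfolding pol_def by (rule finsum_cong') (use cD Dc' tc F0_def in auto)
  finally have xN0: "x \<otimes> t [^] N = pol c F0" using xN by simp
  have xeq: "x = x \<otimes> t [^] N \<otimes> inv t [^] N" using xc tc uc tpup by (simp add: m_assoc)
  show ?thesis
  proof (cases "F0 = {}")
    case True
    then have "x \<otimes> t [^] N = \<zero>" using xN0 by (simp add: pol_def)
    then have "x = \<zero>" using xeq uc by simp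
    then show ?thesis using D0 tc by (intro bexI[of _ "\<zero>"] exI[of _ 0]) auto
  next
    case False
    then obtain M where M: "M \<in> F0" by auto
    then have "F0 = {M}" using F0s by auto
    have cM: "c M \<in> D" using cD M F0F by auto
    have xM: "x \<otimes> t [^] N = c M \<otimes> t [^] M" using xN0 \<open>F0 = {M}\<close> Dc'[OF cM] tc
      by (simp add: pol_def)
    have x2: "x = c M \<otimes> (t [^] M \<otimes> inv t [^] N)" using xeq xM cM Dc' tc uc by (simp add: m_assoc)
    show ?thesis
    proof (cases "N \<le> M")
      case True
      have "t [^] M = t [^] (M - N) \<otimes> t [^] N" using True tc by (simp add: nat_pow_mult)
      then have "t [^] M \<otimes> inv t [^] N = t [^] (M - N)" using tc uc tpup by (simp add: m_assoc)
      then show ?thesis using x2 cM by auto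
    next
      case False
      have "inv t [^] N = inv t [^] M \<otimes> inv t [^] (N - M)" using False uc by (simp add: nat_pow_mult)
      then have "t [^] M \<otimes> inv t [^] N = inv t [^] (N - M)" using tc uc tpup by (simp add: m_assoc[symmetric])
      then show ?thesis using x2 cM by auto
    qed
  qed
qed

lemma mon_pow:
  assumes e: "e \<in> D"
  shows "\<exists>f\<in>D. (e \<otimes> t [^] (p::nat)) [^] (q::nat) = f \<otimes> t [^] (p * q) \<and> (e \<noteq> \<zero> \<longrightarrow> f \<noteq> \<zero>)"
proof (induct q)
  case 0 then show ?case using D1 one_ne tc by (intro bexI[of _ "\<one>"]) auto
next
  case (Suc q)
  then obtain f where f: "f \<in> D" "(e \<otimes> t [^] p) [^] q = f \<otimes> t [^] (p * q)" "e \<noteq> \<zero> \<longrightarrow> f \<noteq> \<zero>" by auto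
  have "(e \<otimes> t [^] p) [^] Suc q = (f \<otimes> t [^] (p * q)) \<otimes> (e \<otimes> t [^] p)" using f(2) by simp
  also have "\<dots> = (f \<otimes> (\<sigma> ^^ (p * q)) e) \<otimes> t [^] (p * Suc q)"
    using monmul[OF f(1) e, of "p * q" p] by (simp add: add.commute)
  finally show ?case using f Dmult sigp_D e nzprod sigp_nz Dc'
    by (intro bexI[of _ "f \<otimes> (\<sigma> ^^ (p * q)) e"]) auto
qed

lemma tu_D:
  assumes f: "f \<in> D" "f' \<in> D"
  shows "(f \<otimes> t [^] (n::nat)) \<otimes> (f' \<otimes> inv t [^] n) \<in> D"
    and "f \<noteq> \<zero> \<Longrightarrow> f' \<noteq> \<zero> \<Longrightarrow> (f \<otimes> t [^] (n::nat)) \<otimes> (f' \<otimes> inv t [^] n) \<noteq> \<zero>"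
proof -
  have "(f \<otimes> t [^] n) \<otimes> (f' \<otimes> inv t [^] n) = f \<otimes> (t [^] n \<otimes> f') \<otimes> inv t [^] n"
    using f Dc' tc uc by (simp add: m_assoc)
  also have "\<dots> = f \<otimes> (\<sigma> ^^ n) f' \<otimes> (t [^] n \<otimes> inv t [^] n)"
    using tpcomm[OF f(2)] f Dc' tc uc sigp_D by (simp add: m_assoc)
  also have "\<dots> = f \<otimes> (\<sigma> ^^ n) f'" using tpup f Dc' sigp_D by simp
  finally have eq: "(f \<otimes> t [^] n) \<otimes> (f' \<otimes> inv t [^] n) = f \<otimes> (\<sigma> ^^ n) f'" .
  show "(f \<otimes> t [^] (n::nat)) \<otimes> (f' \<otimes> inv t [^] n) \<in> D" using eq f Dmult sigp_D by simp
  show "f \<noteq> \<zero> \<Longrightarrow> f' \<noteq> \<zero> \<Longrightarrow> (f \<otimes> t [^] (n::nat)) \<otimes> (f' \<otimes> inv t [^] n) \<noteq> \<zero>"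
    using eq nzprod f Dc' sigp_D sigp_nz by simp
qed

end

lemma (in ring) mono2:
  assumes lt: "i1 < i2" and c: "a i1 \<in> carrier R" "a i2 \<in> carrier R"
    and z: "\<And>i. i \<noteq> i1 \<Longrightarrow> i \<noteq> i2 \<Longrightarrow> \<alpha> i = 0"
  shows "monomial R a \<alpha> n = (if i1 < n then a i1 [^] \<alpha> i1 else \<one>) \<otimes> (if i2 < n then a i2 [^] \<alpha> i2 else \<one>)"
proof (induct n)
  case 0 then show ?case by simp
next
  case (Suc n)
  have "monomial R a \<alpha> (Suc n) = monomial R a \<alpha> n \<otimes> a n [^] \<alpha> n" by simp
  show ?case
  proof (cases "n = i1")
    case True
    then show ?thesis using Suc lt c by simp
  next
    case F1: False
    show ?thesis
    proof (cases "n = i2")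
      case True
      then show ?thesis using Suc lt c by (simp add: m_assoc)
    next
      case False
      then have "\<alpha> n = 0" using z F1 by simp
      then show ?thesis using Suc lt c F1 False by (auto simp: less_Suc_eq)
    qed
  qed
qed

lemma (in ring) mono_zero: "monomial R a (\<lambda>_. 0) n = \<one>"
  by (induct n) simp_all

lemma (in ring) indep_contra:
  assumes ind: "left_alg_indep R D m a" and al: "\<alpha> \<in> exps m" "\<alpha> \<noteq> (\<lambda>_. 0)"
    and y: "monomial R a \<alpha> m \<in> D" and D: "D \<subseteq> carrier R" "\<one> \<in> D" "\<And>x. x \<in> D \<Longrightarrow> \<ominus> x \<in> D"
    and one_ne: "\<one> \<noteq> \<zero>"
  shows False
proof -
  define yy where "yy = monomial R a \<alpha> m"
  have yc: "yy \<in> carrier R" using y D yy_def by auto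
  define F where "F = {\<alpha>, (\<lambda>_. 0)}"
  define c where "c = (\<lambda>\<beta>. if \<beta> = \<alpha> then \<one> else \<ominus> yy)"
  have F: "finite F" "F \<subseteq> exps m" using al unfolding F_def exps_def by auto
  have cF: "c ` F \<subseteq> D" unfolding c_def F_def using D y yy_def by auto
  have "finsum R (\<lambda>\<beta>. c \<beta> \<otimes> monomial R a \<beta> m) F
      = c \<alpha> \<otimes> monomial R a \<alpha> m \<oplus> finsum R (\<lambda>\<beta>. c \<beta> \<otimes> monomial R a \<beta> m) {(\<lambda>_. 0)}"
    unfolding F_def
    by (rule finsum_insert) (use al yc yy_def mono_zero c_def in auto)
  also have "\<dots> = yy \<oplus> \<ominus> yy"
    using al yc yy_def mono_zero c_def by simp
  also have "\<dots> = \<zero>" using yc by (simp add: r_neg)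
  finally have "\<forall>\<beta>\<in>F. c \<beta> = \<zero>" using ind F cF unfolding left_alg_indep_def by blast
  then show False using one_ne unfolding F_def c_def by auto
qed

context lp begin

lemma tau_D: "\<tau> \<in> ring_aut K D \<Longrightarrow> b \<in> D \<Longrightarrow> \<tau> b \<in> D"
  unfolding ring_aut_def ring_iso_def ring_hom_def by auto

lemma S_swap: "lp.S K D (inv t) = S"
  unfolding lp.S_def[OF lp_swap] S_def inv_u by (simp add: insert_commute)

lemma dir1:
  assumes an: "automorphically_normalizable K D S"
  shows "finite_inner_order K D \<sigma>"
proof (rule ccontr)
  assume nf: "\<not> finite_inner_order K D \<sigma>"
  obtain m a \<tau> where aS: "\<forall>i<m. a i \<in> S" and acomm: "\<forall>i<m. \<forall>j<m. a i \<otimes> a j = a j \<otimes> a i"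
    and tau: "\<forall>i<m. \<tau> i \<in> ring_aut K D \<and> automorphic K D (\<tau> i) (a i)"
    and ind: "left_alg_indep K D m a"
    and fg: "fin_gen_left_module K (generate_ring K (D \<union> a ` {..<m})) S"
    using an unfolding automorphically_normalizable_def by blast
  have aC: "\<And>i. i < m \<Longrightarrow> a i \<in> carrier K" using aS S_c by auto
  have form: "\<exists>e\<in>D. \<exists>n::nat. a i = e \<otimes> t [^] n \<or> a i = e \<otimes> inv t [^] n" if i: "i < m" for i
    by (rule auto_form[OF nf, of _ "\<tau> i"]) (use aS tau tau_D i in \<open>auto simp: automorphic_def\<close>)
  consider (A) "\<forall>i<m. \<exists>e\<in>D. \<exists>n::nat. a i = e \<otimes> t [^] n"
    | (B) "\<forall>i<m. \<exists>e\<in>D. \<exists>n::nat. a i = e \<otimes> inv t [^] n"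
    | (C) j l where "j < m" "\<not> (\<exists>e\<in>D. \<exists>n::nat. a j = e \<otimes> inv t [^] n)"
                    "l < m" "\<not> (\<exists>e\<in>D. \<exists>n::nat. a l = e \<otimes> t [^] n)"
    by blast
  then show False
  proof cases
    case A
    then have "a ` {..<m} \<subseteq> PP" using mon_PP by auto
    then show False using nonfg fg by blast
  next
    case B
    then have "a ` {..<m} \<subseteq> lp.PP K D (inv t)" using lp.mon_PP[OF lp_swap] by auto
    then show False using lp.nonfg[OF lp_swap] fg S_swap by metis
  next
    case C
    obtain e p where ep: "e \<in> D" "a j = e \<otimes> t [^] (p::nat)" using form[OF C(1)] C(2) by blast
    have p: "p > 0" "e \<noteq> \<zero>"
    proof -
      show "p > 0"
      proof (rule ccontr)
        assume "\<not> p > 0"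
        then have "a j = e \<otimes> inv t [^] (0::nat)" using ep by simp
        then show False using C(2) ep by blast
      qed
      show "e \<noteq> \<zero>"
      proof
        assume "e = \<zero>"
        then have "a j = \<zero> \<otimes> inv t [^] (0::nat)" using ep tc by simp
        then show False using C(2) D0 by blast
      qed
    qed
    obtain e' q where eq: "e' \<in> D" "a l = e' \<otimes> inv t [^] (q::nat)" using form[OF C(3)] C(4) by blast
    have q: "q > 0" "e' \<noteq> \<zero>"
    proof -
      show "q > 0"
      proof (rule ccontr)
        assume "\<not> q > 0"
        then have "a l = e' \<otimes> t [^] (0::nat)" using eq by simp
        then show False using C(4) eq by blast
      qed
      show "e' \<noteq> \<zero>"
      proof
        assume "e' = \<zero>"
        then have "a l = \<zero> \<otimes> t [^] (0::nat)" using eq uc by simp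
        then show False using C(4) D0 by blast
      qed
    qed
    have jl: "j \<noteq> l" using C ep by blast
    obtain f where f: "f \<in> D" "a j [^] q = f \<otimes> t [^] (p * q)" "f \<noteq> \<zero>"
      using mon_pow[OF ep(1), of p q] ep p by auto
    obtain f' where f': "f' \<in> D" "a l [^] p = f' \<otimes> inv t [^] (q * p)" "f' \<noteq> \<zero>"
      using lp.mon_pow[OF lp_swap eq(1), of q p] eq q by auto
    have P1: "a j [^] q \<otimes> a l [^] p \<in> D"
      using tu_D(1)[OF f(1) f'(1), of "p * q"] f f' by (simp add: mult.commute)
    have P2: "a l [^] p \<otimes> a j [^] q \<in> D"
      using lp.tu_D(1)[OF lp_swap f'(1) f(1), of "p * q"] f f' inv_u by (simp add: mult.commute)
    define \<alpha> where "\<alpha> = (\<lambda>i. if i = j then q else if i = l then p else (0::nat))"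
    have al: "\<alpha> \<in> exps m" unfolding \<alpha>_def exps_def using C(1,3) by auto
    have anz: "\<alpha> \<noteq> (\<lambda>_. 0)"
    proof
      assume "\<alpha> = (\<lambda>_. 0)"
      then have "\<alpha> j = 0" by simp
      then show False using q unfolding \<alpha>_def by simp
    qed
    have z: "\<And>i. i \<noteq> j \<Longrightarrow> i \<noteq> l \<Longrightarrow> \<alpha> i = 0" unfolding \<alpha>_def by auto
    have "monomial K a \<alpha> m \<in> D"
    proof (cases "j < l")
      case True
      have "monomial K a \<alpha> m = a j [^] \<alpha> j \<otimes> a l [^] \<alpha> l"
        using mono2[OF True aC[OF C(1)] aC[OF C(3)] z, where n = m] C(1,3) by simp
      then show ?thesis using P1 jl unfolding \<alpha>_def by simp
    next
      case False
      then have lt: "l < j" using jl by simp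
      have "monomial K a \<alpha> m = a l [^] \<alpha> l \<otimes> a j [^] \<alpha> j"
        using mono2[OF lt aC[OF C(3)] aC[OF C(1)], where \<alpha> = \<alpha> and n = m] z C(1,3) by auto
      then show ?thesis using P2 jl unfolding \<alpha>_def by simp
    qed
    then show False using indep_contra[OF ind al anz _ Dc D1 Dneg one_ne] by simp
  qed
qed

end

context lp begin

lemma PL_I: "finite F \<Longrightarrow> F \<subseteq> {..<n} \<Longrightarrow> c ` F \<subseteq> D \<Longrightarrow> x = pol c F \<Longrightarrow> x \<in> PL n"
  unfolding PL_def by auto

lemma PL_PP: "x \<in> PL n \<Longrightarrow> x \<in> PP" unfolding PL_def PP_def by auto
lemma PL_c: "x \<in> PL n \<Longrightarrow> x \<in> carrier K" using PL_PP PP_c by blast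

lemma PL_zero: "\<zero> \<in> PL n"
  by (rule PL_I[of "{}" _ "\<lambda>_. \<zero>"]) (auto simp: pol_def)

lemma PL_mono: "n \<le> n' \<Longrightarrow> x \<in> PL n \<Longrightarrow> x \<in> PL n'"
  unfolding PL_def by fastforce

lemma PL_mon: "d \<in> D \<Longrightarrow> j < n \<Longrightarrow> d \<otimes> t [^] (j::nat) \<in> PL n"
  by (rule PL_I[of "{j}" _ "\<lambda>_. d"]) (auto simp: mon_pol)

lemma PL_add: assumes "x \<in> PL n" "y \<in> PL n" shows "x \<oplus> y \<in> PL n"
proof -
  obtain c F where c: "finite F" "F \<subseteq> {..<n}" "c ` F \<subseteq> D" "x = pol c F" using assms(1) unfolding PL_def by auto
  obtain e G where e: "finite G" "G \<subseteq> {..<n}" "e ` G \<subseteq> D" "y = pol e G" using assms(2) unfolding PL_def by auto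
  define H where "H = F \<union> G"
  have H: "finite H" "H \<subseteq> {..<n}" using c e H_def by auto
  define c' where "c' = (\<lambda>i. if i \<in> F then c i else \<zero>)"
  define e' where "e' = (\<lambda>i. if i \<in> G then e i else \<zero>)"
  have D': "c' ` H \<subseteq> D" "e' ` H \<subseteq> D" using c(3) e(3) D0 unfolding c'_def e'_def by auto
  have x: "x = pol c' H" unfolding c(4) c'_def by (rule pol_ext[OF H(1) _ c(3)]) (simp add: H_def)
  have y: "y = pol e' H" unfolding e(4) e'_def by (rule pol_ext[OF H(1) _ e(3)]) (simp add: H_def)
  have "x \<oplus> y = pol (\<lambda>i. c' i \<oplus> e' i) H" unfolding x y using pol_add[OF D'] by simp
  moreover have "(\<lambda>i. c' i \<oplus> e' i) ` H \<subseteq> D"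
    by (auto intro!: Dadd imD[OF D'(1)] imD[OF D'(2)])
  ultimately show ?thesis using PL_I[OF H] by blast
qed

lemma PL_lmult: assumes d: "d \<in> D" and x: "x \<in> PL n" shows "d \<otimes> x \<in> PL n"
proof -
  obtain c F where c: "finite F" "F \<subseteq> {..<n}" "c ` F \<subseteq> D" "x = pol c F" using x unfolding PL_def by auto
  have cC: "\<And>i. i \<in> F \<Longrightarrow> c i \<in> carrier K" using imC[OF c(3)] by simp
  have "d \<otimes> x = (\<Oplus>i\<in>F. d \<otimes> (c i \<otimes> t [^] i))"
    unfolding c(4) pol_def by (rule finsum_rdistr) (use c(1) cC tc d Dc' in auto)
  also have "\<dots> = pol (\<lambda>i. d \<otimes> c i) F"
    unfolding pol_def by (rule finsum_cong') (use cC tc d Dc' in \<open>auto simp: m_assoc\<close>)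
  finally have eq: "d \<otimes> x = pol (\<lambda>i. d \<otimes> c i) F" .
  show ?thesis
    by (rule PL_I[OF c(1) c(2) _ eq]) (use c(3) d Dmult in auto)
qed

lemma PL_neg: "x \<in> PL n \<Longrightarrow> \<ominus> x \<in> PL n"
proof -
  assume x: "x \<in> PL n"
  have "\<ominus> x = (\<ominus> \<one>) \<otimes> x" using PL_c[OF x] by (simp add: l_minus)
  then show ?thesis using PL_lmult[OF Dneg[OF D1] x] by simp
qed

lemma PL_finsum: assumes "finite A" "\<And>a. a \<in> A \<Longrightarrow> f a \<in> PL n" shows "finsum K f A \<in> PL n"
  using assms
proof (induct A rule: finite_induct)
  case empty then show ?case using PL_zero by simp
next
  case (insert a A)
  have "finsum K f (insert a A) = f a \<oplus> finsum K f A"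
    by (rule finsum_insert) (use insert PL_c in auto)
  then show ?case using insert PL_add by auto
qed

definition Top where "Top x d e \<longleftrightarrow> e \<in> D \<and> (\<exists>r\<in>PL d. x = e \<otimes> t [^] (d::nat) \<oplus> r)"

lemma Top_PL: "Top x d e \<Longrightarrow> x \<in> PL (Suc d)"
  unfolding Top_def using PL_add PL_mon PL_mono by (metis le_SucI lessI order_refl)

lemma Top_c: "Top x d e \<Longrightarrow> x \<in> carrier K" using Top_PL PL_c by blast

lemma Top_add: assumes "Top x d e" "y \<in> PL d" shows "Top (x \<oplus> y) d e"
proof -
  obtain r where r: "e \<in> D" "r \<in> PL d" "x = e \<otimes> t [^] d \<oplus> r" using assms(1) unfolding Top_def by auto
  have "x \<oplus> y = e \<otimes> t [^] d \<oplus> (r \<oplus> y)" using r PL_c assms(2) Dc' tc by (simp add: a_assoc)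
  then show ?thesis unfolding Top_def using r PL_add assms(2) by blast
qed

lemma Top_lmult: assumes "Top x d e" "f \<in> D" shows "Top (f \<otimes> x) d (f \<otimes> e)"
proof -
  obtain r where r: "e \<in> D" "r \<in> PL d" "x = e \<otimes> t [^] d \<oplus> r" using assms(1) unfolding Top_def by auto
  have "f \<otimes> x = (f \<otimes> e) \<otimes> t [^] d \<oplus> f \<otimes> r" using r PL_c assms(2) Dc' tc by (simp add: r_distr m_assoc)
  then show ?thesis unfolding Top_def using r PL_lmult assms(2) Dmult by blast
qed

lemma Top_zero: assumes "Top \<zero> d e" shows "e = \<zero>"
proof -
  obtain r where r: "e \<in> D" "r \<in> PL d" "\<zero> = e \<otimes> t [^] d \<oplus> r" using assms unfolding Top_def by auto
  have rc: "r \<in> carrier K" using PL_c r by simp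
  have ec: "e \<otimes> t [^] d \<in> carrier K" using r Dc' tc by simp
  have "\<ominus> r = e \<otimes> t [^] d" using minus_equality[where x = r and y = "e \<otimes> t [^] d"] r(3) rc ec by simp
  then have "e \<otimes> t [^] d \<in> PL d" using PL_neg[OF r(2)] by simp
  then obtain c F where c: "finite F" "F \<subseteq> {..<d}" "c ` F \<subseteq> D" "e \<otimes> t [^] d = pol c F"
    unfolding PL_def by auto
  have "(if d \<in> {d} then e else \<zero>) = (if d \<in> F then c d else \<zero>)"
    by (rule pol_unique[of "{d}" "\<lambda>_. e" F c]) (use c r mon_pol in auto)
  then show ?thesis using c(2) by auto
qed

end

locale lpf = lp +
  fixes k :: nat and c :: 'a
  assumes k_pos: "0 < k" and cD: "c \<in> D" and c_nz: "c \<noteq> \<zero>"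
    and c_conj: "\<And>r. r \<in> D \<Longrightarrow> (\<sigma> ^^ k) r = c \<otimes> r \<otimes> inv c"
begin

definition ci where "ci = inv c"
definition w where "w = ci \<otimes> t [^] k"
definition iw where "iw = inv t [^] k \<otimes> c"
definition z where "z = w \<oplus> iw"

lemma cC: "c \<in> carrier K" using cD Dc' by simp
lemma cU: "c \<in> Units K" using units_ax cC c_nz by simp
lemma ciD: "ci \<in> D" unfolding ci_def using Dinv cD c_nz by simp
lemma ciC: "ci \<in> carrier K" using ciD Dc' by simp
lemma c_ci: "c \<otimes> ci = \<one>" unfolding ci_def using cU by simp
lemma ci_c: "ci \<otimes> c = \<one>" unfolding ci_def using cU by simp
lemma ci_nz: "ci \<noteq> \<zero>" using c_ci cC one_ne by auto
lemma wC: "w \<in> carrier K" unfolding w_def using ciC tc by simp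
lemma iwC: "iw \<in> carrier K" unfolding iw_def using cC uc by simp
lemma zC: "z \<in> carrier K" unfolding z_def using wC iwC by simp

lemma w_iw: "w \<otimes> iw = \<one>"
proof -
  have "w \<otimes> iw = ci \<otimes> (t [^] k \<otimes> inv t [^] k) \<otimes> c" unfolding w_def iw_def
    using ciC cC tc uc by (simp add: m_assoc)
  then show ?thesis using tpup ci_c ciC by simp
qed
lemma iw_w: "iw \<otimes> w = \<one>"
proof -
  have "iw \<otimes> w = inv t [^] k \<otimes> (c \<otimes> ci) \<otimes> t [^] k" unfolding w_def iw_def
    using ciC cC tc uc by (simp add: m_assoc)
  then show ?thesis using uptp c_ci uc by simp
qed

lemma wcomm: "d \<in> D \<Longrightarrow> w \<otimes> d = d \<otimes> w"
proof -
  assume d: "d \<in> D"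
  have "w \<otimes> d = ci \<otimes> ((\<sigma> ^^ k) d \<otimes> t [^] k)" unfolding w_def
    using tpcomm[OF d] ciC tc d Dc' by (simp add: m_assoc)
  also have "\<dots> = (ci \<otimes> c) \<otimes> d \<otimes> (ci \<otimes> t [^] k)" using c_conj[OF d] ci_def ciC cC d Dc' tc
    by (simp add: m_assoc)
  finally show ?thesis unfolding w_def using ci_c d Dc' by simp
qed

lemma iwcomm: "d \<in> D \<Longrightarrow> iw \<otimes> d = d \<otimes> iw"
proof -
  assume d: "d \<in> D"
  have dC: "d \<in> carrier K" using d Dc' by simp
  have "iw \<otimes> d = iw \<otimes> d \<otimes> (w \<otimes> iw)" using w_iw iwC dC by simp
  also have "\<dots> = iw \<otimes> (w \<otimes> d) \<otimes> iw" using wcomm[OF d] iwC wC dC by (simp add: m_assoc)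
  also have "\<dots> = d \<otimes> iw" using iw_w iwC wC dC by (simp add: m_assoc[symmetric])
  finally show ?thesis .
qed

lemma zcomm: "d \<in> D \<Longrightarrow> z \<otimes> d = d \<otimes> z"
  unfolding z_def using wcomm iwcomm wC iwC Dc' by (simp add: l_distr r_distr)

lemma wS: "w \<in> S" unfolding w_def using S_mult[OF _ S_pow[OF S_t]] S_D ciD by auto
lemma iwS: "iw \<in> S" unfolding iw_def using S_mult[OF S_pow[OF S_u]] S_D cD by auto
lemma zS: "z \<in> S" unfolding z_def using S_add wS iwS by simp

lemma wpow: "\<exists>f\<in>D. w [^] (M::nat) = f \<otimes> t [^] (k * M) \<and> f \<noteq> \<zero>"
  using mon_pow[OF ciD, of k M] ci_nz unfolding w_def by auto

lemma top_claim: "\<forall>M. n \<le> M \<longrightarrow> (\<exists>e. e \<noteq> \<zero> \<and> Top (z [^] n \<otimes> w [^] M) (k * (M + n)) e)"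
proof (induct n)
  case 0
  show ?case
  proof (intro allI impI)
    fix M :: nat
    obtain f where f: "f \<in> D" "w [^] M = f \<otimes> t [^] (k * M)" "f \<noteq> \<zero>" using wpow by blast
    have "z [^] (0::nat) \<otimes> w [^] M = f \<otimes> t [^] (k * (M + 0)) \<oplus> \<zero>" using f wC Dc' tc by simp
    then show "\<exists>e. e \<noteq> \<zero> \<and> Top (z [^] (0::nat) \<otimes> w [^] M) (k * (M + 0)) e"
      unfolding Top_def using f PL_zero by blast
  qed
next
  case (Suc n)
  show ?case
  proof (intro allI impI)
    fix M :: nat assume M: "Suc n \<le> M"
    then obtain M' where M': "M = Suc M'" by (cases M) auto
    have "z \<otimes> w [^] M = w [^] Suc M \<oplus> w [^] M'"
    proof -
      have "z \<otimes> w [^] M = w \<otimes> w [^] M \<oplus> iw \<otimes> (w \<otimes> w [^] M')"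
        unfolding z_def M' using wC iwC by (simp add: l_distr nat_pow_Suc2[symmetric])
      also have "\<dots> = w [^] Suc M \<oplus> w [^] M'"
      proof -
        have "iw \<otimes> (w \<otimes> w [^] M') = (iw \<otimes> w) \<otimes> w [^] M'" using wC iwC by (simp add: m_assoc)
        moreover have "w \<otimes> w [^] M = w [^] Suc M" using nat_pow_Suc2[OF wC, symmetric] .
        ultimately show ?thesis using iw_w wC by simp
      qed
      finally show ?thesis .
    qed
    then have eq: "z [^] Suc n \<otimes> w [^] M = z [^] n \<otimes> w [^] Suc M \<oplus> z [^] n \<otimes> w [^] M'"
      using zC wC by (simp add: m_assoc r_distr)
    have "n \<le> Suc M" using M by simp
    then obtain e where e: "e \<noteq> \<zero>" "Top (z [^] n \<otimes> w [^] Suc M) (k * (Suc M + n)) e"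
      using Suc[rule_format, of "Suc M"] by blast
    have "n \<le> M'" using M M' by simp
    then obtain e' where "Top (z [^] n \<otimes> w [^] M') (k * (M' + n)) e'"
      using Suc[rule_format, of M'] by blast
    then have "z [^] n \<otimes> w [^] M' \<in> PL (Suc (k * (M' + n)))" by (rule Top_PL)
    moreover have "Suc (k * (M' + n)) \<le> k * (M + Suc n)"
    proof -
      have "k * (M + Suc n) = k * (M' + n) + k * 2" unfolding M' by (simp add: algebra_simps)
      then show ?thesis using k_pos by simp
    qed
    ultimately have "z [^] n \<otimes> w [^] M' \<in> PL (k * (M + Suc n))" using PL_mono by blast
    moreover have "k * (Suc M + n) = k * (M + Suc n)" by simp
    ultimately show "\<exists>e. e \<noteq> \<zero> \<and> Top (z [^] Suc n \<otimes> w [^] M) (k * (M + Suc n)) e"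
      using Top_add e eq by metis
  qed
qed

end


context lpf begin

lemma mono_z: "monomial K (\<lambda>_. z) \<alpha> 1 = z [^] \<alpha> 0"
  using zC by simp

lemma exps1_eq: "\<alpha> \<in> exps 1 \<Longrightarrow> \<beta> \<in> exps 1 \<Longrightarrow> \<alpha> 0 = \<beta> 0 \<Longrightarrow> \<alpha> = \<beta>"
proof (rule ext)
  fix i assume a: "\<alpha> \<in> exps 1" "\<beta> \<in> exps 1" "\<alpha> 0 = \<beta> 0"
  show "\<alpha> i = \<beta> i"
  proof (cases "i = 0")
    case True then show ?thesis using a by simp
  next
    case False then have "i \<ge> 1" by simp
    then show ?thesis using a unfolding exps_def by simp
  qed
qed

lemma pl_bound: "a < n0 \<Longrightarrow> Suc (k * (n0 + a)) \<le> k * (n0 + n0)"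
proof -
  assume a: "a < n0"
  have "n0 + n0 = (n0 + a) + (n0 - a)" using a by simp
  then have "k * (n0 + n0) = k * (n0 + a) + k * (n0 - a)" by (metis add_mult_distrib2)
  moreover have "k * 1 \<le> k * (n0 - a)" using a by (intro mult_le_mono2) simp
  ultimately show ?thesis using k_pos by linarith
qed

lemma z_indep: "left_alg_indep K D 1 (\<lambda>_. z)"
  unfolding left_alg_indep_def
proof (intro allI impI)
  fix F :: "(nat \<Rightarrow> nat) set" and cc
  assume F: "finite F" and Fe: "F \<subseteq> exps 1" and cF: "cc ` F \<subseteq> D"
    and sum0: "finsum K (\<lambda>\<alpha>. cc \<alpha> \<otimes> monomial K (\<lambda>_. z) \<alpha> 1) F = \<zero>"
  have ccD: "\<And>\<alpha>. \<alpha> \<in> F \<Longrightarrow> cc \<alpha> \<in> D" using imD[OF cF] .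
  have ccC: "\<And>\<alpha>. \<alpha> \<in> F \<Longrightarrow> cc \<alpha> \<in> carrier K" using ccD Dc' by simp
  show "\<forall>\<alpha>\<in>F. cc \<alpha> = \<zero>"
  proof (rule ccontr)
    assume "\<not> (\<forall>\<alpha>\<in>F. cc \<alpha> = \<zero>)"
    define F1 where "F1 = {\<alpha> \<in> F. cc \<alpha> \<noteq> \<zero>}"
    have F1: "finite F1" "F1 \<noteq> {}" using F \<open>\<not> (\<forall>\<alpha>\<in>F. cc \<alpha> = \<zero>)\<close> unfolding F1_def by auto
    define n0 where "n0 = Max ((\<lambda>\<alpha>. \<alpha> 0) ` F1)"
    have "n0 \<in> (\<lambda>\<alpha>. \<alpha> 0) ` F1" unfolding n0_def using F1 by (intro Max_in) auto
    then obtain \<alpha>1 where a1: "\<alpha>1 \<in> F1" "\<alpha>1 0 = n0" by auto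
    have le: "\<And>\<alpha>. \<alpha> \<in> F1 \<Longrightarrow> \<alpha> 0 \<le> n0" unfolding n0_def using F1 by (intro Max_ge) auto
    have a1F: "\<alpha>1 \<in> F" "cc \<alpha>1 \<noteq> \<zero>" using a1 F1_def by auto
    define d where "d = k * (n0 + n0)"
    have "\<zero> = finsum K (\<lambda>\<alpha>. cc \<alpha> \<otimes> monomial K (\<lambda>_. z) \<alpha> 1) F \<otimes> w [^] n0"
      using sum0 wC by simp
    also have "\<dots> = (\<Oplus>\<alpha>\<in>F. cc \<alpha> \<otimes> monomial K (\<lambda>_. z) \<alpha> 1 \<otimes> w [^] n0)"
      by (rule finsum_ldistr) (use F ccC zC wC in \<open>auto simp: mono_z\<close>)
    also have "\<dots> = (\<Oplus>\<alpha>\<in>F. cc \<alpha> \<otimes> (z [^] \<alpha> 0 \<otimes> w [^] n0))"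
      by (rule finsum_cong') (use ccC zC wC in \<open>auto simp: mono_z m_assoc\<close>)
    also have "\<dots> = cc \<alpha>1 \<otimes> (z [^] \<alpha>1 0 \<otimes> w [^] n0) \<oplus> (\<Oplus>\<alpha>\<in>F - {\<alpha>1}. cc \<alpha> \<otimes> (z [^] \<alpha> 0 \<otimes> w [^] n0))"
    proof -
      have "F = insert \<alpha>1 (F - {\<alpha>1})" using a1F by auto
      then have "(\<Oplus>\<alpha>\<in>F. cc \<alpha> \<otimes> (z [^] \<alpha> 0 \<otimes> w [^] n0))
          = (\<Oplus>\<alpha>\<in>insert \<alpha>1 (F - {\<alpha>1}). cc \<alpha> \<otimes> (z [^] \<alpha> 0 \<otimes> w [^] n0))" by simp
      also have "\<dots> = cc \<alpha>1 \<otimes> (z [^] \<alpha>1 0 \<otimes> w [^] n0) \<oplus> (\<Oplus>\<alpha>\<in>F - {\<alpha>1}. cc \<alpha> \<otimes> (z [^] \<alpha> 0 \<otimes> w [^] n0))"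
        by (rule finsum_insert) (use F ccC zC wC a1F in auto)
      finally show ?thesis .
    qed
    finally have z0: "\<zero> = cc \<alpha>1 \<otimes> (z [^] n0 \<otimes> w [^] n0) \<oplus> (\<Oplus>\<alpha>\<in>F - {\<alpha>1}. cc \<alpha> \<otimes> (z [^] \<alpha> 0 \<otimes> w [^] n0))"
      using a1 by simp
    obtain e where e: "e \<noteq> \<zero>" "Top (z [^] n0 \<otimes> w [^] n0) (k * (n0 + n0)) e"
      using top_claim[of n0] by auto
    have T1: "Top (cc \<alpha>1 \<otimes> (z [^] n0 \<otimes> w [^] n0)) d (cc \<alpha>1 \<otimes> e)"
      unfolding d_def by (rule Top_lmult[OF e(2) ccD[OF a1F(1)]])
    have rest: "(\<Oplus>\<alpha>\<in>F - {\<alpha>1}. cc \<alpha> \<otimes> (z [^] \<alpha> 0 \<otimes> w [^] n0)) \<in> PL d"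
    proof (rule PL_finsum)
      show "finite (F - {\<alpha>1})" using F by simp
      fix \<alpha> assume a: "\<alpha> \<in> F - {\<alpha>1}"
      show "cc \<alpha> \<otimes> (z [^] \<alpha> 0 \<otimes> w [^] n0) \<in> PL d"
      proof (cases "cc \<alpha> = \<zero>")
        case True then show ?thesis using zC wC PL_zero by simp
      next
        case False
        then have aF1: "\<alpha> \<in> F1" using a F1_def by auto
        have "\<alpha> 0 \<noteq> n0"
        proof
          assume "\<alpha> 0 = n0"
          then have "\<alpha> = \<alpha>1" using exps1_eq[of \<alpha> \<alpha>1] a a1 a1F Fe by auto
          then show False using a by simp
        qed
        then have lt: "\<alpha> 0 < n0" using le[OF aF1] by simp
        have "\<alpha> 0 \<le> n0" using lt by simp
        then obtain e' where "Top (z [^] \<alpha> 0 \<otimes> w [^] n0) (k * (n0 + \<alpha> 0)) e'"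
          using top_claim[of "\<alpha> 0", rule_format, of n0] by blast
        then have "z [^] \<alpha> 0 \<otimes> w [^] n0 \<in> PL (Suc (k * (n0 + \<alpha> 0)))" by (rule Top_PL)
        then have "z [^] \<alpha> 0 \<otimes> w [^] n0 \<in> PL d" unfolding d_def using PL_mono pl_bound[OF lt] by blast
        then show ?thesis using PL_lmult ccD a by simp
      qed
    qed
    have "Top \<zero> d (cc \<alpha>1 \<otimes> e)" using Top_add[OF T1 rest] z0 by simp
    then have "cc \<alpha>1 \<otimes> e = \<zero>" by (rule Top_zero)
    moreover have "e \<in> D" using e(2) unfolding Top_def by simp
    ultimately show False using nzprod[OF ccC[OF a1F(1)] _ a1F(2) e(1)] Dc' by simp
  qed
qed

end


context lpf begin

definition BB where "BB = generate_ring K (D \<union> {z})"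
definition GG where "GG = (\<lambda>j::nat. t [^] j) ` {..<2*k}"
definition VV where "VV = {finsum K (\<lambda>g. cc g \<otimes> g) GG | cc. cc ` GG \<subseteq> BB}"

lemma gz_c: "D \<union> {z} \<subseteq> carrier K" using Dc zC by auto
lemma BB_sub: "subring BB K" unfolding BB_def using generate_ring_is_subring[OF gz_c] .
lemma BB_c: "x \<in> BB \<Longrightarrow> x \<in> carrier K" using subringE(1)[OF BB_sub] by auto
lemma BB_D: "x \<in> D \<Longrightarrow> x \<in> BB" unfolding BB_def by (auto intro: generate_ring.incl)
lemma BB_z: "z \<in> BB" unfolding BB_def by (auto intro: generate_ring.incl)
lemma BB_0: "\<zero> \<in> BB" using subringE(2)[OF BB_sub] .
lemma BB_1: "\<one> \<in> BB" using subringE(3)[OF BB_sub] .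
lemma BB_neg: "x \<in> BB \<Longrightarrow> \<ominus> x \<in> BB" using subringE(5)[OF BB_sub] .
lemma BB_mult: "x \<in> BB \<Longrightarrow> y \<in> BB \<Longrightarrow> x \<otimes> y \<in> BB" using subringE(6)[OF BB_sub] .
lemma BB_add: "x \<in> BB \<Longrightarrow> y \<in> BB \<Longrightarrow> x \<oplus> y \<in> BB" using subringE(7)[OF BB_sub] .
lemma BB_S: "BB \<subseteq> S" unfolding BB_def
  by (rule generate_ring_min_subring1[OF gz_c S_sub]) (use S_D zS in auto)

lemma GG_fin: "finite GG" unfolding GG_def by simp
lemma GG_S: "GG \<subseteq> S" unfolding GG_def using S_pow[OF S_t] by auto
lemma GG_c: "g \<in> GG \<Longrightarrow> g \<in> carrier K" unfolding GG_def using tc by auto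

lemma S_finsum: assumes "finite A" "\<And>a. a \<in> A \<Longrightarrow> f a \<in> S" shows "finsum K f A \<in> S"
  using assms
proof (induct A rule: finite_induct)
  case empty then show ?case using subringE(2)[OF S_sub] by simp
next
  case (insert a A)
  have "finsum K f (insert a A) = f a \<oplus> finsum K f A"
    by (rule finsum_insert) (use insert S_c in auto)
  then show ?case using insert S_add by auto
qed

lemma VV_S: "VV \<subseteq> S"
proof
  fix x assume "x \<in> VV"
  then obtain cc where cc: "cc ` GG \<subseteq> BB" "x = finsum K (\<lambda>g. cc g \<otimes> g) GG" unfolding VV_def by auto
  show "x \<in> S" unfolding cc(2)
    by (rule S_finsum[OF GG_fin]) (use cc(1) BB_S GG_S S_mult in blast)
qed

lemma VV_c: "x \<in> VV \<Longrightarrow> x \<in> carrier K" using VV_S S_c by auto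

lemma VV_I: "cc ` GG \<subseteq> BB \<Longrightarrow> x = finsum K (\<lambda>g. cc g \<otimes> g) GG \<Longrightarrow> x \<in> VV"
  unfolding VV_def by auto

lemma VV_add: assumes "x \<in> VV" "y \<in> VV" shows "x \<oplus> y \<in> VV"
proof -
  obtain cc where cc: "cc ` GG \<subseteq> BB" "x = finsum K (\<lambda>g. cc g \<otimes> g) GG" using assms(1) unfolding VV_def by auto
  obtain dd where dd: "dd ` GG \<subseteq> BB" "y = finsum K (\<lambda>g. dd g \<otimes> g) GG" using assms(2) unfolding VV_def by auto
  have ccC: "\<And>g. g \<in> GG \<Longrightarrow> cc g \<in> carrier K" using cc(1) BB_c by auto
  have ddC: "\<And>g. g \<in> GG \<Longrightarrow> dd g \<in> carrier K" using dd(1) BB_c by auto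
  have "x \<oplus> y = (\<Oplus>g\<in>GG. cc g \<otimes> g \<oplus> dd g \<otimes> g)"
    unfolding cc(2) dd(2) by (rule finsum_addf[symmetric]) (use ccC ddC GG_c in auto)
  also have "\<dots> = (\<Oplus>g\<in>GG. (cc g \<oplus> dd g) \<otimes> g)"
    by (rule finsum_cong') (use ccC ddC GG_c in \<open>auto simp: l_distr\<close>)
  finally show ?thesis by (rule VV_I[rotated]) (use cc(1) dd(1) BB_add in auto)
qed

lemma VV_lmult: assumes b: "b \<in> BB" and x: "x \<in> VV" shows "b \<otimes> x \<in> VV"
proof -
  obtain cc where cc: "cc ` GG \<subseteq> BB" "x = finsum K (\<lambda>g. cc g \<otimes> g) GG" using x unfolding VV_def by auto
  have ccC: "\<And>g. g \<in> GG \<Longrightarrow> cc g \<in> carrier K" using cc(1) BB_c by auto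
  have "b \<otimes> x = (\<Oplus>g\<in>GG. b \<otimes> (cc g \<otimes> g))"
    unfolding cc(2) by (rule finsum_rdistr) (use ccC GG_c GG_fin b BB_c in auto)
  also have "\<dots> = (\<Oplus>g\<in>GG. (b \<otimes> cc g) \<otimes> g)"
    by (rule finsum_cong') (use ccC GG_c b BB_c in \<open>auto simp: m_assoc\<close>)
  finally show ?thesis by (rule VV_I[rotated]) (use cc(1) b BB_mult in auto)
qed

lemma VV_zero: "\<zero> \<in> VV"
proof -
  have "\<zero> = (\<Oplus>g\<in>GG. \<zero> \<otimes> g)"
  proof -
    have "(\<Oplus>g\<in>GG. \<zero> \<otimes> g) = (\<Oplus>g\<in>GG. \<zero>)" by (rule finsum_cong') (use GG_c in auto)
    then show ?thesis by simp
  qed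
  then show ?thesis by (intro VV_I[of "\<lambda>_. \<zero>"]) (use BB_0 in auto)
qed

lemma VV_finsum: assumes "finite A" "\<And>a. a \<in> A \<Longrightarrow> f a \<in> VV" shows "finsum K f A \<in> VV"
  using assms
proof (induct A rule: finite_induct)
  case empty then show ?case using VV_zero by simp
next
  case (insert a A)
  have "finsum K f (insert a A) = f a \<oplus> finsum K f A"
    by (rule finsum_insert) (use insert VV_c in auto)
  then show ?case using insert VV_add by auto
qed

lemma VV_mon: assumes b: "b \<in> BB" and j: "j < 2 * k" shows "b \<otimes> t [^] (j::nat) \<in> VV"
proof -
  have tj: "t [^] j \<in> GG" unfolding GG_def using j by auto
  have "(\<Oplus>g\<in>GG. (if g = t [^] j then b else \<zero>) \<otimes> g) = (\<Oplus>g\<in>GG. if t [^] j = g then b \<otimes> g else \<zero>)"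
    by (rule finsum_cong') (use GG_c b BB_c in auto)
  also have "\<dots> = b \<otimes> t [^] j"
    by (rule add.finprod_singleton[OF tj GG_fin]) (use GG_c b BB_c in auto)
  finally show ?thesis by (intro VV_I[of "\<lambda>g. if g = t [^] j then b else \<zero>"]) (use b BB_0 in auto)
qed

lemma VV_rmult_gen:
  assumes h: "h \<in> carrier K" and hyp: "\<And>b j. b \<in> BB \<Longrightarrow> j < 2 * k \<Longrightarrow> b \<otimes> t [^] (j::nat) \<otimes> h \<in> VV"
    and v: "v \<in> VV"
  shows "v \<otimes> h \<in> VV"
proof -
  obtain cc where cc: "cc ` GG \<subseteq> BB" "v = finsum K (\<lambda>g. cc g \<otimes> g) GG" using v unfolding VV_def by auto
  have ccC: "\<And>g. g \<in> GG \<Longrightarrow> cc g \<in> carrier K" using cc(1) BB_c by auto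
  have "v \<otimes> h = (\<Oplus>g\<in>GG. cc g \<otimes> g \<otimes> h)"
    unfolding cc(2) by (rule finsum_ldistr) (use ccC GG_c GG_fin h in auto)
  also have "\<dots> \<in> VV"
  proof (rule VV_finsum[OF GG_fin])
    fix g assume g: "g \<in> GG"
    then obtain j where j: "j < 2 * k" "g = t [^] j" unfolding GG_def by auto
    show "cc g \<otimes> g \<otimes> h \<in> VV" using hyp[OF _ j(1)] j(2) cc(1) g by auto
  qed
  finally show ?thesis .
qed

lemma tk_cw: "t [^] k = c \<otimes> w"
  unfolding w_def using cC ciC tc c_ci by (simp add: m_assoc[symmetric])

lemma ww: "w \<otimes> w = z \<otimes> w \<oplus> \<ominus> \<one>"
proof -
  have "z \<otimes> w = w \<otimes> w \<oplus> \<one>" unfolding z_def using wC iwC iw_w by (simp add: l_distr)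
  then have "z \<otimes> w \<oplus> \<ominus> \<one> = w \<otimes> w \<oplus> (\<one> \<oplus> \<ominus> \<one>)" using wC by (simp add: a_assoc)
  then show ?thesis using wC by (simp add: r_neg)
qed

lemma t2k: "t [^] (2 * k) = (c \<otimes> c \<otimes> z \<otimes> ci) \<otimes> t [^] k \<oplus> (\<ominus> (c \<otimes> c)) \<otimes> t [^] (0::nat)"
proof -
  have "t [^] (2 * k) = t [^] k \<otimes> t [^] k" using tc by (simp add: nat_pow_mult mult_2)
  also have "\<dots> = c \<otimes> (w \<otimes> c) \<otimes> w" unfolding tk_cw using cC wC by (simp add: m_assoc)
  also have "\<dots> = (c \<otimes> c) \<otimes> (w \<otimes> w)" using wcomm[OF cD] cC wC by (simp add: m_assoc)
  also have "\<dots> = (c \<otimes> c \<otimes> z) \<otimes> w \<oplus> \<ominus> (c \<otimes> c)" unfolding ww using cC wC zC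
    by (simp add: r_distr m_assoc r_minus)
  also have "\<dots> = (c \<otimes> c \<otimes> z \<otimes> ci) \<otimes> t [^] k \<oplus> (\<ominus> (c \<otimes> c)) \<otimes> t [^] (0::nat)"
    unfolding w_def using cC ciC zC tc by (simp add: m_assoc)
  finally show ?thesis .
qed

lemma u_id: "inv t = (z \<otimes> ci) \<otimes> t [^] (k - 1) \<oplus> (\<ominus> (ci \<otimes> ci)) \<otimes> t [^] (2 * k - 1)"
proof -
  obtain k' where k': "k = Suc k'" using k_pos by (cases k) auto
  have ukc: "inv t [^] k = iw \<otimes> ci" unfolding iw_def using uc cC ciC c_ci by (simp add: m_assoc)
  have "inv t = inv t [^] k \<otimes> t [^] (k - 1)"
  proof -
    have "inv t [^] k \<otimes> t [^] (k - 1) = inv t \<otimes> (inv t [^] k' \<otimes> t [^] k')"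
      unfolding k' using uc tc by (simp add: m_assoc pow_Suc_comm[of "inv t"])
    then show ?thesis using uptp uc by simp
  qed
  also have "\<dots> = (z \<oplus> \<ominus> w) \<otimes> ci \<otimes> t [^] (k - 1)"
  proof -
    have "z \<oplus> \<ominus> w = iw \<oplus> (w \<oplus> \<ominus> w)" unfolding z_def using wC iwC
      by (metis a_assoc a_comm add.inv_closed)
    then have "iw = z \<oplus> \<ominus> w" using wC iwC by (simp add: r_neg)
    then show ?thesis using ukc by simp
  qed
  also have "\<dots> = (z \<otimes> ci) \<otimes> t [^] (k - 1) \<oplus> \<ominus> ((w \<otimes> ci) \<otimes> t [^] (k - 1))"
    using zC wC ciC tc by (simp add: l_distr l_minus)
  also have "(w \<otimes> ci) \<otimes> t [^] (k - 1) = (ci \<otimes> ci) \<otimes> t [^] (2 * k - 1)"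
  proof -
    have "(w \<otimes> ci) \<otimes> t [^] (k - 1) = (ci \<otimes> ci) \<otimes> (t [^] k \<otimes> t [^] (k - 1))"
      unfolding wcomm[OF ciD] unfolding w_def using ciC tc by (simp add: m_assoc)
    also have "t [^] k \<otimes> t [^] (k - 1) = t [^] (2 * k - 1)"
    proof -
      have "t [^] k \<otimes> t [^] (k - 1) = t [^] (k + (k - 1))" by (rule nat_pow_mult[OF tc])
      moreover have "k + (k - 1) = 2 * k - 1" using k' by simp
      ultimately show ?thesis by simp
    qed
    finally show ?thesis .
  qed
  finally show ?thesis using ciC tc by (simp add: l_minus)
qed

lemma t2k_VV: "t [^] (2 * k) \<in> VV"
  unfolding t2k
  by (intro VV_add VV_mon) (use k_pos cD ciD BB_D BB_z BB_mult BB_neg in auto)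

lemma u_VV: "inv t \<in> VV"
  by (subst u_id, intro VV_add VV_mon) (use k_pos cD ciD BB_D BB_z BB_mult BB_neg in auto)

lemma gen_VV:
  assumes b: "b \<in> BB" and j: "j < 2 * k" and h: "h \<in> D \<union> {t, inv t}"
  shows "b \<otimes> t [^] (j::nat) \<otimes> h \<in> VV"
proof -
  have bC: "b \<in> carrier K" using BB_c b by simp
  consider "h \<in> D" | "h = t" | "h = inv t" using h by auto
  then show ?thesis
  proof cases
    case 1
    have hC: "h \<in> carrier K" using 1 Dc' by simp
    have "b \<otimes> t [^] j \<otimes> h = b \<otimes> (t [^] j \<otimes> h)" using bC tc hC by (simp add: m_assoc)
    also have "\<dots> = b \<otimes> ((\<sigma> ^^ j) h \<otimes> t [^] j)" using tpcomm[OF 1] by simp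
    also have "\<dots> = (b \<otimes> (\<sigma> ^^ j) h) \<otimes> t [^] j"
      using bC tc Dc'[OF sigp_D[OF 1]] by (simp add: m_assoc)
    finally show ?thesis using VV_mon[OF BB_mult[OF b BB_D[OF sigp_D[OF 1]]] j] by simp
  next
    case 2
    have eq: "b \<otimes> t [^] j \<otimes> h = b \<otimes> t [^] Suc j" using 2 bC tc by (simp add: m_assoc)
    show ?thesis
    proof (cases "Suc j < 2 * k")
      case True then show ?thesis using eq VV_mon[OF b True] by simp
    next
      case False
      then have "Suc j = 2 * k" using j by simp
      then show ?thesis using eq VV_lmult[OF b t2k_VV] by simp
    qed
  next
    case 3
    show ?thesis
    proof (cases j)
      case 0 then show ?thesis using 3 VV_lmult[OF b u_VV] bC by simp
    next
      case (Suc j')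
      have "t [^] j = t [^] j' \<otimes> t" using Suc by simp
      then have "b \<otimes> t [^] j \<otimes> h = b \<otimes> t [^] j' \<otimes> (t \<otimes> inv t)"
        using 3 bC tc uc by (simp add: m_assoc)
      also have "\<dots> = b \<otimes> t [^] j'" using tu bC tc by simp
      finally show ?thesis using VV_mon[OF b, of j'] Suc j by simp
    qed
  qed
qed

lemma S_VV_aux: "x \<in> S \<Longrightarrow> \<forall>v\<in>VV. v \<otimes> x \<in> VV"
  unfolding S_def
proof (induct rule: generate_ring.induct)
  case one then show ?case using VV_c by simp
next
  case (incl h)
  have hc: "h \<in> carrier K" using incl gens_c by auto
  show ?case
  proof
    fix v assume v: "v \<in> VV"
    show "v \<otimes> h \<in> VV" by (rule VV_rmult_gen[OF hc _ v]) (rule gen_VV[OF _ _ incl])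
  qed
next
  case (a_inv h)
  have hc: "h \<in> carrier K" using a_inv(1) generate_ring_in_carrier[OF gens_c] by auto
  show ?case
  proof
    fix v assume v: "v \<in> VV"
    have "v \<otimes> \<ominus> h = (\<ominus> \<one>) \<otimes> (v \<otimes> h)" using VV_c[OF v] hc by (simp add: r_minus l_minus)
    then show "v \<otimes> \<ominus> h \<in> VV" using VV_lmult[OF BB_neg[OF BB_1]] a_inv(2) v by simp
  qed
next
  case (eng_add h1 h2)
  have hc: "h1 \<in> carrier K" "h2 \<in> carrier K"
    using eng_add generate_ring_in_carrier[OF gens_c] by auto
  show ?case
  proof
    fix v assume v: "v \<in> VV"
    have "v \<otimes> (h1 \<oplus> h2) = v \<otimes> h1 \<oplus> v \<otimes> h2" using VV_c[OF v] hc by (simp add: r_distr)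
    then show "v \<otimes> (h1 \<oplus> h2) \<in> VV" using eng_add v VV_add by simp
  qed
next
  case (eng_mult h1 h2)
  have hc: "h1 \<in> carrier K" "h2 \<in> carrier K"
    using eng_mult generate_ring_in_carrier[OF gens_c] by auto
  show ?case
  proof
    fix v assume v: "v \<in> VV"
    have "v \<otimes> (h1 \<otimes> h2) = (v \<otimes> h1) \<otimes> h2" using VV_c[OF v] hc by (simp add: m_assoc)
    then show "v \<otimes> (h1 \<otimes> h2) \<in> VV" using eng_mult v by simp
  qed
qed

lemma S_eq_VV: "S = VV"
proof
  show "VV \<subseteq> S" by (rule VV_S)
  show "S \<subseteq> VV"
  proof
    fix x assume x: "x \<in> S"
    have "\<one> \<in> VV" using VV_mon[OF BB_1, of 0] k_pos by simp
    then have "\<one> \<otimes> x \<in> VV" using S_VV_aux[OF x] by simp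
    then show "x \<in> VV" using x S_c by auto
  qed
qed

lemma dir2: "automorphically_normalizable K D S"
  unfolding automorphically_normalizable_def
proof (intro exI[of _ 1] exI[of _ "\<lambda>_. z"] exI[of _ "\<lambda>_. id"] conjI)
  show "\<forall>i<1. z \<in> S" using zS by simp
  show "\<forall>i<1. \<forall>j<1. z \<otimes> z = z \<otimes> z" by simp
  show "\<forall>i<(1::nat). id \<in> ring_aut K D \<and> automorphic K D id z"
    unfolding ring_aut_def ring_iso_def ring_hom_def automorphic_def
    using zcomm by (auto simp: bij_betw_def)
  show "\<forall>i<1. \<forall>j<1. \<forall>x\<in>D. id (id x) = id (id x)" by simp
  show "left_alg_indep K D 1 (\<lambda>_. z)" by (rule z_indep)
  have "(\<lambda>_. z) ` {..<(1::nat)} = {z}" by auto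
  then have "generate_ring K (D \<union> (\<lambda>_. z) ` {..<(1::nat)}) = BB" unfolding BB_def by simp
  moreover have "fin_gen_left_module K BB S"
    unfolding fin_gen_left_module_def using GG_fin GG_S S_eq_VV unfolding VV_def by blast
  ultimately show "fin_gen_left_module K (generate_ring K (D \<union> (\<lambda>_. z) ` {..<(1::nat)})) S" by metis
qed

end


theorem lemma5p6:
  fixes K :: "('a, 'b) ring_scheme" and D :: "'a set" and \<sigma> :: "'a \<Rightarrow> 'a" and t :: 'a
  assumes "skew_fraction_field K D \<sigma> t"
  shows "automorphically_normalizable K D (generate_ring K (D \<union> {t, inv\<^bsub>K\<^esub> t}))
           \<longleftrightarrow> finite_inner_order K D \<sigma>"
proof -
  have dr: "division_ring K" and sd: "subdivring D K" and sg: "\<sigma> \<in> ring_aut K D"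
    and tc: "t \<in> carrier K" and tcomm: "\<forall>a \<in> D. t \<otimes>\<^bsub>K\<^esub> a = \<sigma> a \<otimes>\<^bsub>K\<^esub> t"
    and ind: "\<forall>F c. finite F \<longrightarrow> c ` F \<subseteq> D \<longrightarrow>
        finsum K (\<lambda>n. c n \<otimes>\<^bsub>K\<^esub> (t [^]\<^bsub>K\<^esub> (n::nat))) F = \<zero>\<^bsub>K\<^esub> \<longrightarrow>
        (\<forall>n \<in> F. c n = \<zero>\<^bsub>K\<^esub>)"
    using assms unfolding skew_fraction_field_def by auto
  have rK: "ring K" using dr unfolding division_ring_def by simp
  have lp: "lp K D \<sigma> t"
  proof (rule lp.intro[OF rK], rule lp_axioms.intro)
    show "\<And>x. x \<in> carrier K \<Longrightarrow> x \<noteq> \<zero>\<^bsub>K\<^esub> \<Longrightarrow> x \<in> Units K"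
      using dr unfolding division_ring_def by auto
    show "\<one>\<^bsub>K\<^esub> \<noteq> \<zero>\<^bsub>K\<^esub>" using dr unfolding division_ring_def by auto
    show "subring D K" using sd unfolding subdivring_def by auto
    show "\<And>x. x \<in> D \<Longrightarrow> x \<noteq> \<zero>\<^bsub>K\<^esub> \<Longrightarrow> inv\<^bsub>K\<^esub> x \<in> D"
      using sd unfolding subdivring_def by auto
    show "\<sigma> \<in> ring_aut K D" by (rule sg)
    show "t \<in> carrier K" by (rule tc)
    show "\<And>a. a \<in> D \<Longrightarrow> t \<otimes>\<^bsub>K\<^esub> a = \<sigma> a \<otimes>\<^bsub>K\<^esub> t" using tcomm by auto
    show "\<And>F c. finite F \<Longrightarrow> c ` F \<subseteq> D \<Longrightarrow>
        (\<Oplus>\<^bsub>K\<^esub>n\<in>F. c n \<otimes>\<^bsub>K\<^esub> t [^]\<^bsub>K\<^esub> (n::nat)) = \<zero>\<^bsub>K\<^esub> \<Longrightarrow> \<forall>n\<in>F. c n = \<zero>\<^bsub>K\<^esub>"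
      using ind by blast
  qed
  interpret L: lp K D \<sigma> t by (rule lp)
  have S: "generate_ring K (D \<union> {t, inv\<^bsub>K\<^esub> t}) = L.S" by (simp add: L.S_def)
  show ?thesis
  proof
    assume "automorphically_normalizable K D (generate_ring K (D \<union> {t, inv\<^bsub>K\<^esub> t}))"
    then show "finite_inner_order K D \<sigma>" using L.dir1 S by simp
  next
    assume "finite_inner_order K D \<sigma>"
    then obtain k c where kc: "0 < k" "c \<in> D" "c \<noteq> \<zero>\<^bsub>K\<^esub>"
      "\<forall>r\<in>D. (\<sigma> ^^ k) r = c \<otimes>\<^bsub>K\<^esub> r \<otimes>\<^bsub>K\<^esub> inv\<^bsub>K\<^esub> c"
      using L.fio_elim by metis
    have lpf: "lpf K D \<sigma> t k c"
      by (rule lpf.intro[OF lp], rule lpf_axioms.intro) (use kc in auto)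
    interpret F: lpf K D \<sigma> t k c by (rule lpf)
    show "automorphically_normalizable K D (generate_ring K (D \<union> {t, inv\<^bsub>K\<^esub> t}))"
      using F.dir2 S by simp
  qed
qed

end
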